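(* Let $\Omega\subset\mathbb{R}^N$ be an open bounded domain, $1\le j\le N$, and $x_0\in\Omega$. Then there exist $g\in C(\partial\Omega)$ and $u_0\in C(\overline\Omega)$ with $u_0|_{\partial\Omega}=g$, and constants $\mu_1>0$, $k>0$, such that the viscosity solution $u$ of $u_t-\lambda_j(D^2u)=0$ in $\Omega\times(0,\infty)$, $u=g$ on $\partial\Omega\times(0,\infty)$, $u(\cdot,0)=u_0$ in $\Omega$, and the viscosity solution $z$ of $\lambda_j(D^2z)=0$ in $\Omega$, $z=g$ on $\partial\Omega$, satisfy \[ u(x_0,t)\ge z(x_0)+ke^{-\mu_1t}\quad\text{for all }t>0. \] (Analogously, $g,u_0$ can be chosen so that $u(x_0,t)\le z(x_0)-ke^{-\mu_1 t}$ for all $t>0$.)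
   Context: $\lambda_j(A)$ is the $j$-th smallest eigenvalue of a symmetric $N\times N$ matrix $A$, $\lambda_j(A)=\inf_{\dim S=j}\sup_{v\in S,|v|=1}\langle Av,v\rangle$. Solutions are viscosity solutions continuous up to the boundary and attaining the data pointwise. *)

theory Defs
  imports "HOL-Analysis.Analysis"
begin

text \<open>j-th smallest eigenvalue of a (symmetric) N x N matrix, via the
  Courant--Fischer min-max formula of the paper:
  lambda_j(A) = inf over subspaces S of dimension j of sup over unit v in S of (A v) . v\<close>
definition lambda_j :: "nat \<Rightarrow> real^'n^'n \<Rightarrow> real" where
  "lambda_j j A = Inf {Sup {(A *v v) \<bullet> v | v. v \<in> S \<and> norm v = 1} | S. subspace S \<and> dim S = j}"

definition C2_with :: "(real^'n \<Rightarrow> real) \<Rightarrow> (real^'n \<Rightarrow> real^'n) \<Rightarrow> (real^'n \<Rightarrow> real^'n^'n) \<Rightarrow> bool" where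
  "C2_with \<phi> G H \<longleftrightarrow>
     (\<forall>x. (\<phi> has_derivative (\<lambda>h. G x \<bullet> h)) (at x)) \<and>
     (\<forall>x. (G has_derivative (\<lambda>h. H x *v h)) (at x)) \<and>
     continuous_on UNIV H"

definition C21_with :: "(real^'n \<Rightarrow> real \<Rightarrow> real) \<Rightarrow> (real^'n \<Rightarrow> real \<Rightarrow> real^'n)
     \<Rightarrow> (real^'n \<Rightarrow> real \<Rightarrow> real^'n^'n) \<Rightarrow> (real^'n \<Rightarrow> real \<Rightarrow> real) \<Rightarrow> bool" where
  "C21_with \<phi> G H T \<longleftrightarrow>
     (\<forall>x t. ((\<lambda>y. \<phi> y t) has_derivative (\<lambda>h. G x t \<bullet> h)) (at x)) \<and>
     (\<forall>x t. ((\<lambda>y. G y t) has_derivative (\<lambda>h. H x t *v h)) (at x)) \<and>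
     (\<forall>x t. ((\<lambda>s. \<phi> x s) has_real_derivative T x t) (at t)) \<and>
     continuous_on UNIV (\<lambda>(x,t). \<phi> x t) \<and>
     continuous_on UNIV (\<lambda>(x,t). G x t) \<and>
     continuous_on UNIV (\<lambda>(x,t). H x t) \<and>
     continuous_on UNIV (\<lambda>(x,t). T x t)"

text \<open>Viscosity solution of lambda_j(D^2 z) = 0 in Omega (written as -lambda_j(D^2 z) = 0,
  a degenerate elliptic equation), continuous up to the boundary with z = g on the boundary.\<close>
definition visc_super_ell :: "nat \<Rightarrow> (real^'n) set \<Rightarrow> (real^'n \<Rightarrow> real) \<Rightarrow> bool" where
  "visc_super_ell j \<Omega> z \<longleftrightarrow>
     (\<forall>x\<in>\<Omega>. \<forall>\<phi> G H. C2_with \<phi> G H \<and>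
        (\<exists>e>0. \<forall>y\<in>\<Omega>. dist y x < e \<longrightarrow> z y - \<phi> y \<ge> z x - \<phi> x)
        \<longrightarrow> lambda_j j (H x) \<le> 0)"

definition visc_sub_ell :: "nat \<Rightarrow> (real^'n) set \<Rightarrow> (real^'n \<Rightarrow> real) \<Rightarrow> bool" where
  "visc_sub_ell j \<Omega> z \<longleftrightarrow>
     (\<forall>x\<in>\<Omega>. \<forall>\<phi> G H. C2_with \<phi> G H \<and>
        (\<exists>e>0. \<forall>y\<in>\<Omega>. dist y x < e \<longrightarrow> z y - \<phi> y \<le> z x - \<phi> x)
        \<longrightarrow> lambda_j j (H x) \<ge> 0)"

definition elliptic_solution ::
  "nat \<Rightarrow> (real^'n) set \<Rightarrow> (real^'n \<Rightarrow> real) \<Rightarrow> (real^'n \<Rightarrow> real) \<Rightarrow> bool" where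
  "elliptic_solution j \<Omega> g z \<longleftrightarrow>
     continuous_on (closure \<Omega>) z \<and>
     (\<forall>x\<in>frontier \<Omega>. z x = g x) \<and>
     visc_super_ell j \<Omega> z \<and> visc_sub_ell j \<Omega> z"

definition visc_super_par :: "nat \<Rightarrow> (real^'n) set \<Rightarrow> (real^'n \<Rightarrow> real \<Rightarrow> real) \<Rightarrow> bool" where
  "visc_super_par j \<Omega> u \<longleftrightarrow>
     (\<forall>x\<in>\<Omega>. \<forall>t>0. \<forall>\<phi> G H T. C21_with \<phi> G H T \<and>
        (\<exists>e>0. \<forall>y\<in>\<Omega>. \<forall>s>0. dist y x < e \<and> \<bar>s - t\<bar> < e \<longrightarrow> u y s - \<phi> y s \<ge> u x t - \<phi> x t)
        \<longrightarrow> T x t - lambda_j j (H x t) \<ge> 0)"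

definition visc_sub_par :: "nat \<Rightarrow> (real^'n) set \<Rightarrow> (real^'n \<Rightarrow> real \<Rightarrow> real) \<Rightarrow> bool" where
  "visc_sub_par j \<Omega> u \<longleftrightarrow>
     (\<forall>x\<in>\<Omega>. \<forall>t>0. \<forall>\<phi> G H T. C21_with \<phi> G H T \<and>
        (\<exists>e>0. \<forall>y\<in>\<Omega>. \<forall>s>0. dist y x < e \<and> \<bar>s - t\<bar> < e \<longrightarrow> u y s - \<phi> y s \<le> u x t - \<phi> x t)
        \<longrightarrow> T x t - lambda_j j (H x t) \<le> 0)"

definition parabolic_solution ::
  "nat \<Rightarrow> (real^'n) set \<Rightarrow> (real^'n \<Rightarrow> real) \<Rightarrow> (real^'n \<Rightarrow> real) \<Rightarrow> (real^'n \<Rightarrow> real \<Rightarrow> real) \<Rightarrow> bool" where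
  "parabolic_solution j \<Omega> g u0 u \<longleftrightarrow>
     continuous_on (closure \<Omega> \<times> {0..}) (\<lambda>(x,t). u x t) \<and>
     (\<forall>x\<in>frontier \<Omega>. \<forall>t>0. u x t = g x) \<and>
     (\<forall>x\<in>\<Omega>. u x 0 = u0 x) \<and>
     visc_super_par j \<Omega> u \<and> visc_sub_par j \<Omega> u"

end

theory Submission
  imports Defs
begin

definition CS :: "'n set \<Rightarrow> (real^'n) set" where
  "CS I = {x. \<forall>i. i \<notin> I \<longrightarrow> x$i = 0}"

lemma subspace_CS: "subspace (CS I)"
  by (auto simp: subspace_def CS_def)

lemma dim_CS: "dim (CS (I::'n::finite set)) = card I"
proof -
  have A: "CS I = {x::real^'n. \<forall>b\<in>Basis. b \<notin> (\<lambda>i. axis i 1) ` I \<longrightarrow> x \<bullet> b = 0}"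
    unfolding CS_def Basis_vec_def by (auto simp: cart_eq_inner_axis[symmetric] inner_axis axis_eq_axis)
  have B: "(\<lambda>i. axis i (1::real)) ` I \<subseteq> Basis" by (auto simp: Basis_vec_def)
  have C: "card ((\<lambda>i. axis i (1::real)) ` I) = card I"
    by (rule card_image) (auto simp: inj_on_def axis_eq_axis)
  show ?thesis unfolding A dim_substandard[OF B] C ..
qed

lemma quad_bound: "\<exists>B. \<forall>v::real^'n. \<bar>(A *v v) \<bullet> v\<bar> \<le> B * (norm v)^2"
proof -
  obtain B where B: "\<And>v. norm (A *v v) \<le> norm v * B"
    using bounded_linear.bounded[OF matrix_vector_mul_bounded_linear[of A]] by blast
  have "\<bar>(A *v v) \<bullet> v\<bar> \<le> B * (norm v)^2" for v
  proof -
    have "\<bar>(A *v v) \<bullet> v\<bar> \<le> norm (A *v v) * norm v" by (rule Cauchy_Schwarz_ineq2)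
    also have "\<dots> \<le> norm v * B * norm v" by (rule mult_right_mono[OF B]) simp
    finally show ?thesis by (simp add: power2_eq_square algebra_simps)
  qed
  then show ?thesis by blast
qed

lemma unit_in_subspace:
  fixes S :: "(real^'n) set"
  assumes "subspace S" "dim S \<ge> 1"
  shows "\<exists>v\<in>S. norm v = 1"
proof -
  from assms(2) have "\<not> S \<subseteq> {0}" using dim_eq_0[of S] by linarith
  then obtain w where w: "w \<in> S" "w \<noteq> 0" by blast
  then have "w /\<^sub>R norm w \<in> S" using assms(1) by (simp add: subspace_scale)
  moreover have "norm (w /\<^sub>R norm w) = 1" using w by simp
  ultimately show ?thesis by blast
qed

lemma sup_set_props:
  fixes A :: "real^'n^'n"
  assumes "subspace S" "dim S \<ge> 1"
  shows "bdd_above {(A *v v) \<bullet> v | v. v \<in> S \<and> norm v = 1}"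
    and "{(A *v v) \<bullet> v | v. v \<in> S \<and> norm v = 1} \<noteq> {}"
    and "\<exists>B. Sup {(A *v v) \<bullet> v | v. v \<in> S \<and> norm v = 1} \<ge> - B \<and> (\<forall>S'. True)"
proof -
  obtain B where B: "\<And>v::real^'n. \<bar>(A *v v) \<bullet> v\<bar> \<le> B * (norm v)^2" using quad_bound by blast
  show bdd: "bdd_above {(A *v v) \<bullet> v | v. v \<in> S \<and> norm v = 1}"
  proof (rule bdd_aboveI)
    fix x assume "x \<in> {(A *v v) \<bullet> v | v. v \<in> S \<and> norm v = 1}"
    then obtain v where "norm v = 1" "x = (A *v v) \<bullet> v" by blast
    then show "x \<le> B" using B[of v] by (simp add: abs_le_iff)
  qed
  obtain v where v: "v \<in> S" "norm v = 1" using unit_in_subspace assms by blast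
  then show ne: "{(A *v v) \<bullet> v | v. v \<in> S \<and> norm v = 1} \<noteq> {}" by blast
  have "(A *v v) \<bullet> v \<le> Sup {(A *v v) \<bullet> v | v. v \<in> S \<and> norm v = 1}"
    by (rule cSup_upper[OF _ bdd]) (use v in blast)
  moreover have "- B \<le> (A *v v) \<bullet> v" using B[of v] v by (simp add: abs_le_iff)
  ultimately show "\<exists>B. Sup {(A *v v) \<bullet> v | v. v \<in> S \<and> norm v = 1} \<ge> - B \<and> (\<forall>S'. True)"
    by (intro exI[of _ B]) simp
qed

lemma Sup_lower_bound_uniform:
  fixes A :: "real^'n^'n"
  shows "\<exists>B. \<forall>S. subspace S \<and> dim S \<ge> 1 \<longrightarrow> Sup {(A *v v) \<bullet> v | v. v \<in> S \<and> norm v = 1} \<ge> - B"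
proof -
  obtain B where B: "\<And>v::real^'n. \<bar>(A *v v) \<bullet> v\<bar> \<le> B * (norm v)^2" using quad_bound by blast
  have "Sup {(A *v v) \<bullet> v | v. v \<in> S \<and> norm v = 1} \<ge> - B" if SS: "subspace S" "dim S \<ge> 1" for S
  proof -
    obtain v where v: "v \<in> S" "norm v = 1" using unit_in_subspace SS by blast
    have "(A *v v) \<bullet> v \<le> Sup {(A *v v) \<bullet> v | v. v \<in> S \<and> norm v = 1}"
      by (rule cSup_upper[OF _ sup_set_props(1)[OF SS]]) (use v in blast)
    moreover have "- B \<le> (A *v v) \<bullet> v" using B[of v] v by (simp add: abs_le_iff)
    ultimately show ?thesis by simp
  qed
  then show ?thesis by blast
qed

lemma exists_subspace_dim:
  assumes "j \<le> CARD('n)"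
  shows "\<exists>S::(real^'n) set. subspace S \<and> dim S = j"
proof -
  obtain I :: "'n set" where "card I = j" using assms
    by (meson obtain_subset_with_card_n)
  then show ?thesis using subspace_CS[of I] dim_CS[of I] by blast
qed

lemma lambda_upper:
  fixes A :: "real^'n^'n"
  assumes "subspace S0" "dim S0 = j" "1 \<le> j"
    and le: "\<And>v. v \<in> S0 \<Longrightarrow> (A *v v) \<bullet> v \<le> c * (v \<bullet> v)"
  shows "lambda_j j A \<le> c"
proof -
  obtain B where B: "\<And>S. subspace S \<Longrightarrow> dim S \<ge> 1 \<Longrightarrow> Sup {(A *v v) \<bullet> v | v. v \<in> S \<and> norm v = 1} \<ge> - B"
    using Sup_lower_bound_uniform[of A] by blast
  let ?X = "{Sup {(A *v v) \<bullet> v | v. v \<in> S \<and> norm v = 1} | S. subspace S \<and> dim S = j}"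
  have bdd: "bdd_below ?X" unfolding bdd_below_def using B assms(3) by (intro exI[of _ "-B"]) force
  have "lambda_j j A \<le> Sup {(A *v v) \<bullet> v | v. v \<in> S0 \<and> norm v = 1}"
    unfolding lambda_j_def by (rule cInf_lower[OF _ bdd]) (use assms in blast)
  also have "\<dots> \<le> c"
  proof (rule cSup_least)
    show "{(A *v v) \<bullet> v | v. v \<in> S0 \<and> norm v = 1} \<noteq> {}"
      using sup_set_props(2)[of S0 A] assms by simp
    fix x assume "x \<in> {(A *v v) \<bullet> v | v. v \<in> S0 \<and> norm v = 1}"
    then obtain v where "v \<in> S0" "norm v = 1" "x = (A *v v) \<bullet> v" by blast
    then show "x \<le> c" using le[of v] by (simp add: inner_commute norm_eq_1)
  qed
  finally show ?thesis .
qed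

lemma subspace_meet:
  fixes S V :: "(real^'n) set"
  assumes "subspace S" "subspace V" "dim S + dim V > CARD('n)"
  shows "\<exists>v\<in>S \<inter> V. norm v = 1"
proof -
  have "dim {x + y |x y. x \<in> S \<and> y \<in> V} + dim (S \<inter> V) = dim S + dim V"
    using dim_sums_Int[OF assms(1,2)] .
  moreover have "dim {x + y |x y. x \<in> S \<and> y \<in> V} \<le> CARD('n)" by (rule dim_subset_UNIV_cart)
  ultimately have "dim (S \<inter> V) \<ge> 1" using assms(3) by linarith
  then show ?thesis using unit_in_subspace[of "S \<inter> V"] subspace_inter[OF assms(1,2)] by blast
qed

lemma lambda_lower:
  fixes A :: "real^'n^'n"
  assumes "subspace V" "dim V = CARD('n) + 1 - j" "1 \<le> j" "j \<le> CARD('n)"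
    and ge: "\<And>v. v \<in> V \<Longrightarrow> (A *v v) \<bullet> v \<ge> c * (v \<bullet> v)"
  shows "lambda_j j A \<ge> c"
  unfolding lambda_j_def
proof (rule cInf_greatest)
  show "{Sup {(A *v v) \<bullet> v | v. v \<in> S \<and> norm v = 1} | S. subspace S \<and> dim S = j} \<noteq> {}"
    using exists_subspace_dim[OF assms(4)] by blast
  fix x assume "x \<in> {Sup {(A *v v) \<bullet> v | v. v \<in> S \<and> norm v = 1} | S. subspace S \<and> dim S = j}"
  then obtain S where S: "subspace S" "dim S = j" "x = Sup {(A *v v) \<bullet> v | v. v \<in> S \<and> norm v = 1}" by blast
  obtain v where v: "v \<in> S \<inter> V" "norm v = 1"
    using subspace_meet[OF S(1) assms(1)] S(2) assms(2,4) by auto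
  have "c \<le> (A *v v) \<bullet> v" using ge[of v] v by (simp add: inner_commute norm_eq_1)
  also have "\<dots> \<le> x" unfolding S(3)
    by (rule cSup_upper[OF _ sup_set_props(1)]) (use v S assms(3) in auto)
  finally show "c \<le> x" .
qed

definition Dg :: "('n \<Rightarrow> real) \<Rightarrow> real^'n^'n" where
  "Dg d = (\<chi> i k. if i = k then d i else 0)"

lemma Dg_mult_nth [simp]: "(Dg d *v h) $ k = d k * h $ k"
proof -
  have "(Dg d *v h) $ k = (\<Sum>j\<in>UNIV. (if k = j then d k else 0) * h$j)"
    by (simp add: Dg_def matrix_vector_mult_def)
  also have "\<dots> = (\<Sum>j\<in>UNIV. (if k = j then d k * h $ k else 0))"
    by (rule sum.cong) auto
  also have "\<dots> = d k * h $ k" by (simp add: sum.delta)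
  finally show ?thesis .
qed

lemma has_derivative_vec_nth' [derivative_intros]:
  "((\<lambda>y::real^'n. y $ i) has_derivative (\<lambda>h. h $ i)) F"
  using bounded_linear_vec_nth by (rule bounded_linear_imp_has_derivative)

definition quadf :: "('n \<Rightarrow> real) \<Rightarrow> real^'n \<Rightarrow> real^'n \<Rightarrow> real" where
  "quadf cc x0 y = (\<Sum>i\<in>UNIV. cc i * (y$i - x0$i)^2)"

lemma quadf_deriv:
  "(quadf cc x0 has_derivative (\<lambda>h. \<Sum>i\<in>UNIV. 2 * cc i * (x$i - x0$i) * h$i)) (at x)"
  unfolding quadf_def
  by (auto intro!: derivative_eq_intros sum.cong simp: algebra_simps)

lemma C21_sep:
  fixes P Pd Pdd Pt :: "real \<Rightarrow> real \<Rightarrow> real" and i1 :: "'n::finite"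
  assumes d1: "\<And>s t. ((\<lambda>s. P s t) has_real_derivative Pd s t) (at s)"
    and d2: "\<And>s t. ((\<lambda>s. Pd s t) has_real_derivative Pdd s t) (at s)"
    and dt: "\<And>s t. ((\<lambda>t. P s t) has_real_derivative Pt s t) (at t)"
    and c0: "continuous_on UNIV (\<lambda>(s,t). P s t)"
    and c1: "continuous_on UNIV (\<lambda>(s,t). Pd s t)"
    and c2: "continuous_on UNIV (\<lambda>(s,t). Pdd s t)"
    and ct: "continuous_on UNIV (\<lambda>(s,t). Pt s t)"
  shows "C21_with (\<lambda>x t. quadf cc x0 x + P (x$i1) t)
     (\<lambda>x t. \<chi> i. 2 * cc i * (x$i - x0$i) + (if i = i1 then Pd (x$i1) t else 0))
     (\<lambda>x t. Dg (\<lambda>i. 2 * cc i + (if i = i1 then Pdd (x$i1) t else 0)))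
     (\<lambda>x t. Pt (x$i1) t)"
  unfolding C21_with_def
proof (intro conjI allI)
  fix x :: "real^'n" and t :: real
  have "((\<lambda>y. P (y$i1) t) has_derivative (\<lambda>h. Pd (x$i1) t * h$i1)) (at x)"
    using has_derivative_compose[OF has_derivative_vec_nth'[of i1] d1[where s="x$i1" and t=t, unfolded has_field_derivative_def]]
    by (simp add: mult.commute)
  from has_derivative_add[OF quadf_deriv[of cc x0 x] this]
  have D: "((\<lambda>y. quadf cc x0 y + P (y$i1) t) has_derivative
      (\<lambda>h. (\<Sum>i\<in>UNIV. 2 * cc i * (x$i - x0$i) * h$i) + Pd (x$i1) t * h$i1)) (at x)" by simp
  have E: "(\<lambda>h. (\<Sum>i\<in>UNIV. 2 * cc i * (x$i - x0$i) * h$i) + Pd (x$i1) t * h$i1) =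
      (\<lambda>h. (\<chi> i. 2 * cc i * (x$i - x0$i) + (if i = i1 then Pd (x$i1) t else 0)) \<bullet> h)"
  proof (rule ext)
    fix h :: "real^'n"
    have "(\<chi> i. 2 * cc i * (x$i - x0$i) + (if i = i1 then Pd (x$i1) t else 0)) \<bullet> h
       = (\<Sum>i\<in>UNIV. 2 * cc i * (x$i - x0$i) * h$i + (if i = i1 then Pd (x$i1) t * h$i1 else 0))"
      unfolding inner_vec_def by (auto intro!: sum.cong simp: algebra_simps)
    also have "\<dots> = (\<Sum>i\<in>UNIV. 2 * cc i * (x$i - x0$i) * h$i) + Pd (x$i1) t * h$i1"
      by (simp add: sum.distrib sum.delta')
    finally show "(\<Sum>i\<in>UNIV. 2 * cc i * (x$i - x0$i) * h$i) + Pd (x$i1) t * h$i1 =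
      (\<chi> i. 2 * cc i * (x$i - x0$i) + (if i = i1 then Pd (x$i1) t else 0)) \<bullet> h" by simp
  qed
  show "((\<lambda>y. quadf cc x0 y + P (y$i1) t) has_derivative
      (\<lambda>h. (\<chi> i. 2 * cc i * (x$i - x0$i) + (if i = i1 then Pd (x$i1) t else 0)) \<bullet> h)) (at x)"
    by (rule has_derivative_eq_rhs[OF D E])
  show "((\<lambda>y. \<chi> i. 2 * cc i * (y$i - x0$i) + (if i = i1 then Pd (y$i1) t else 0)) has_derivative
      (\<lambda>h. Dg (\<lambda>i. 2 * cc i + (if i = i1 then Pdd (x$i1) t else 0)) *v h)) (at x)"
  proof (rule iffD2[OF has_derivative_componentwise_within], rule ballI)
    fix b :: "real^'n" assume "b \<in> Basis"
    then obtain k u where "u \<in> Basis" "b = axis k u" unfolding Basis_vec_def by blast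
    then have b: "b = axis k 1" by (simp add: Basis_real_def)
    have *: "((\<lambda>y. Pd (y$i1) t) has_derivative (\<lambda>h. Pdd (x$i1) t * h$i1)) (at x)"
      using has_derivative_compose[OF has_derivative_vec_nth'[of i1] d2[where s="x$i1" and t=t, unfolded has_field_derivative_def]]
      by (simp add: mult.commute)
    have e1: "((\<lambda>y. 2 * cc k * (y$k - x0$k)) has_derivative (\<lambda>h. 2 * cc k * (h$k - 0))) (at x)"
      by (rule has_derivative_mult_right[OF has_derivative_diff[OF has_derivative_vec_nth' has_derivative_const]])
    have lhs: "(\<lambda>y. (\<chi> i. 2 * cc i * (y$i - x0$i) + (if i = i1 then Pd (y$i1) t else 0)) \<bullet> b)
        = (\<lambda>y. 2 * cc k * (y$k - x0$k) + (if k = i1 then Pd (y$i1) t else 0))"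
      unfolding b inner_axis by simp
    have rhs: "(\<lambda>h. (Dg (\<lambda>i. 2 * cc i + (if i = i1 then Pdd (x$i1) t else 0)) *v h) \<bullet> b)
        = (\<lambda>h. 2 * cc k * (h$k - 0) + (if k = i1 then Pdd (x$i1) t * h$i1 else 0))"
      unfolding b inner_axis by (auto simp: algebra_simps)
    show "((\<lambda>y. (\<chi> i. 2 * cc i * (y$i - x0$i) + (if i = i1 then Pd (y$i1) t else 0)) \<bullet> b) has_derivative
        (\<lambda>h. (Dg (\<lambda>i. 2 * cc i + (if i = i1 then Pdd (x$i1) t else 0)) *v h) \<bullet> b)) (at x)"
      unfolding lhs rhs
    proof (cases "k = i1")
      case True
      show "((\<lambda>y. 2 * cc k * (y$k - x0$k) + (if k = i1 then Pd (y$i1) t else 0)) has_derivative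
        (\<lambda>h. 2 * cc k * (h$k - 0) + (if k = i1 then Pdd (x$i1) t * h$i1 else 0))) (at x)"
        using has_derivative_add[OF e1 *] True by simp
    next
      case False
      show "((\<lambda>y. 2 * cc k * (y$k - x0$k) + (if k = i1 then Pd (y$i1) t else 0)) has_derivative
        (\<lambda>h. 2 * cc k * (h$k - 0) + (if k = i1 then Pdd (x$i1) t * h$i1 else 0))) (at x)"
        using e1 False by simp
    qed
  qed
  show "((\<lambda>s. quadf cc x0 x + P (x$i1) s) has_real_derivative Pt (x$i1) t) (at t)"
    using DERIV_add[OF DERIV_const dt[where s="x$i1" and t=t]] by simp
next
  have cpair: "continuous_on UNIV (\<lambda>p::(real^'n) \<times> real. (fst p $ m, snd p))" for m
    by (intro continuous_intros)
  have comp: "continuous_on UNIV (\<lambda>p::(real^'n) \<times> real. Q (fst p $ m) (snd p))"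
    if "continuous_on UNIV (\<lambda>(s,t). Q s t)" for Q :: "real \<Rightarrow> real \<Rightarrow> real" and m
    using continuous_on_compose2[OF that cpair] by (simp add: case_prod_beta)
  have c0': "continuous_on UNIV (\<lambda>p::(real^'n) \<times> real. P (fst p $ m) (snd p))" for m by (rule comp[OF c0])
  have c1': "continuous_on UNIV (\<lambda>p::(real^'n) \<times> real. Pd (fst p $ m) (snd p))" for m by (rule comp[OF c1])
  have c2': "continuous_on UNIV (\<lambda>p::(real^'n) \<times> real. Pdd (fst p $ m) (snd p))" for m by (rule comp[OF c2])
  show "continuous_on UNIV (\<lambda>(x, t). quadf cc x0 x + P (x$i1) t)"
    unfolding case_prod_beta quadf_def
    by (intro continuous_intros c0')
  show "continuous_on UNIV (\<lambda>(x, t). \<chi> i. 2 * cc i * (x$i - x0$i) + (if i = i1 then Pd (x$i1) t else 0))"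
    unfolding case_prod_beta
  proof (intro continuous_on_vec_lambda)
    fix i show "continuous_on UNIV (\<lambda>p. 2 * cc i * (fst p $ i - x0 $ i) + (if i = i1 then Pd (fst p $ i1) (snd p) else 0))"
      by (cases "i = i1") (simp_all, (intro continuous_intros c1')+)
  qed
  show "continuous_on UNIV (\<lambda>(x, t). Dg (\<lambda>i. 2 * cc i + (if i = i1 then Pdd (x$i1) t else 0)))"
    unfolding case_prod_beta Dg_def
  proof (intro continuous_on_vec_lambda)
    fix i k show "continuous_on UNIV (\<lambda>p. if i = k then 2 * cc i + (if i = i1 then Pdd (fst p $ i1) (snd p) else 0) else 0)"
      by (cases "i = k"; cases "i = i1") (simp_all, (intro continuous_intros c2')+)
  qed
  show "continuous_on UNIV (\<lambda>(x, t). Pt (x$i1) t)"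
    unfolding case_prod_beta by (rule comp[OF ct])
qed

lemma C2_add_const:
  assumes "C2_with W G H" shows "C2_with (\<lambda>y. W y + c) G H"
  using assms unfolding C2_with_def by (auto intro: has_derivative_add_const)

lemma C21_to_C2:
  assumes "C21_with (\<lambda>x t. \<phi> x) (\<lambda>x t. G x) (\<lambda>x t. H x) T"
  shows "C2_with \<phi> G H"
proof -
  have c: "continuous_on UNIV (\<lambda>(x,t::real). H x)" using assms unfolding C21_with_def by blast
  have "continuous_on UNIV (\<lambda>x::real^'a. (x, 0::real))" by (intro continuous_intros)
  from continuous_on_compose2[OF c this] have "continuous_on UNIV H" by simp
  with assms show ?thesis unfolding C21_with_def C2_with_def by blast
qed

lemma C21_add_time:
  assumes "C21_with \<psi> G H T"
    and fd: "\<And>t. (f has_real_derivative f' t) (at t)"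
    and fc: "continuous_on UNIV f'"
  shows "C21_with (\<lambda>y r. \<psi> y r + f r) G H (\<lambda>y r. T y r + f' r)"
proof -
  have cf: "continuous_on UNIV f"
    using fd by (meson DERIV_isCont continuous_at_imp_continuous_on)
  have "continuous_on UNIV (\<lambda>p::(real^'a)\<times>real. f (snd p))"
    by (rule continuous_on_compose2[OF cf]) (auto intro: continuous_intros)
  moreover have "continuous_on UNIV (\<lambda>p::(real^'a)\<times>real. f' (snd p))"
    by (rule continuous_on_compose2[OF fc]) (auto intro: continuous_intros)
  ultimately have cf2: "continuous_on UNIV (\<lambda>p::(real^'a)\<times>real. f (snd p))"
    and cf3: "continuous_on UNIV (\<lambda>p::(real^'a)\<times>real. f' (snd p))" by auto
  have A: "\<And>x t. ((\<lambda>y. \<psi> y t) has_derivative (\<lambda>h. G x t \<bullet> h)) (at x)"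
    "\<And>x t. ((\<lambda>y. G y t) has_derivative (\<lambda>h. H x t *v h)) (at x)"
    "\<And>x t. ((\<lambda>s. \<psi> x s) has_real_derivative T x t) (at t)"
    "continuous_on UNIV (\<lambda>(x,t). \<psi> x t)"
    "continuous_on UNIV (\<lambda>(x,t). G x t)"
    "continuous_on UNIV (\<lambda>(x,t). H x t)"
    "continuous_on UNIV (\<lambda>(x,t). T x t)"
    using assms(1) unfolding C21_with_def by blast+
  have c1: "continuous_on UNIV (\<lambda>(x, t). \<psi> x t + f t)"
    using continuous_on_add[OF A(4)[unfolded case_prod_beta] cf2] by (simp add: case_prod_beta)
  have c2: "continuous_on UNIV (\<lambda>(x, t). T x t + f' t)"
    using continuous_on_add[OF A(7)[unfolded case_prod_beta] cf3] by (simp add: case_prod_beta)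
  have d3: "((\<lambda>s. \<psi> x s + f s) has_real_derivative T x t + f' t) (at t)" for x t
    using DERIV_add[OF A(3) fd] .
  have d1: "((\<lambda>y. \<psi> y t + f t) has_derivative (\<lambda>h. G x t \<bullet> h)) (at x)" for x t
    using has_derivative_add_const[OF A(1)] .
  show ?thesis unfolding C21_with_def
    apply (intro conjI allI)
    apply (rule d1) apply (rule A(2)) apply (rule d3) apply (rule c1)
    apply (rule A(5)) apply (rule A(6)) apply (rule c2) done
qed

lemma closure_sub: "closure S \<subseteq> S \<union> frontier S"
proof
  fix x assume "x \<in> closure S"
  then show "x \<in> S \<union> frontier S"
    using interior_subset[of S] unfolding frontier_def by blast
qed

lemma elliptic_upper:
  fixes \<Omega> :: "(real^'n) set"
  assumes bd: "bounded \<Omega>" and zc: "continuous_on (closure \<Omega>) z"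
    and zg: "\<forall>x\<in>frontier \<Omega>. z x = g x" and sub: "visc_sub_ell j \<Omega> z"
    and W: "C2_with W G H" and neg: "\<forall>x\<in>\<Omega>. lambda_j j (H x) < 0"
    and gW: "\<forall>x\<in>frontier \<Omega>. g x \<le> W x"
    and x: "x \<in> closure \<Omega>"
  shows "z x \<le> W x"
proof -
  have Wc: "continuous_on UNIV W"
    using W unfolding C2_with_def
    by (meson differentiable_def differentiable_imp_continuous_on differentiable_on_def)
  have cc: "compact (closure \<Omega>)" using bd by (simp add: compact_closure)
  have ne: "closure \<Omega> \<noteq> {}" using x by auto
  have ct: "continuous_on (closure \<Omega>) (\<lambda>y. z y - W y)"
    by (rule continuous_on_diff[OF zc continuous_on_subset[OF Wc subset_UNIV]])
  obtain p where p: "p \<in> closure \<Omega>" "\<And>y. y \<in> closure \<Omega> \<Longrightarrow> z y - W y \<le> z p - W p"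
    using continuous_attains_sup[OF cc ne ct] by blast
  show ?thesis
  proof (cases "p \<in> frontier \<Omega>")
    case True
    then have "z p - W p \<le> 0" using zg gW by simp
    then show ?thesis using p(2)[OF x] by linarith
  next
    case False
    with p(1) closure_sub have pin: "p \<in> \<Omega>" by blast
    let ?c = "z p - W p"
    have "C2_with (\<lambda>y. W y + ?c) G H" by (rule C2_add_const[OF W])
    moreover have "\<exists>e>0. \<forall>y\<in>\<Omega>. dist y p < e \<longrightarrow> z y - (W y + ?c) \<le> z p - (W p + ?c)"
    proof (intro exI[of _ 1] conjI ballI impI)
      fix y assume "y \<in> \<Omega>"
      then have "y \<in> closure \<Omega>" using closure_subset by blast
      from p(2)[OF this] show "z y - (W y + ?c) \<le> z p - (W p + ?c)" by simp
    qed simp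
    moreover have "\<And>\<phi> G H. C2_with \<phi> G H \<Longrightarrow> (\<exists>e>0. \<forall>y\<in>\<Omega>. dist y p < e \<longrightarrow> z y - \<phi> y \<le> z p - \<phi> p) \<Longrightarrow> lambda_j j (H p) \<ge> 0"
      using sub pin unfolding visc_sub_ell_def by blast
    ultimately have L1: "lambda_j j (H p) \<ge> 0" by blast
    have L2: "lambda_j j (H p) < 0" using neg pin by blast
    show ?thesis using L1 L2 by linarith
  qed
qed

lemma elliptic_lower:
  fixes \<Omega> :: "(real^'n) set"
  assumes bd: "bounded \<Omega>" and zc: "continuous_on (closure \<Omega>) z"
    and zg: "\<forall>x\<in>frontier \<Omega>. z x = g x" and sup: "visc_super_ell j \<Omega> z"
    and W: "C2_with W G H" and pos: "\<forall>x\<in>\<Omega>. lambda_j j (H x) > 0"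
    and gW: "\<forall>x\<in>frontier \<Omega>. W x \<le> g x"
    and x: "x \<in> closure \<Omega>"
  shows "W x \<le> z x"
proof -
  have Wc: "continuous_on UNIV W"
    using W unfolding C2_with_def
    by (meson differentiable_def differentiable_imp_continuous_on differentiable_on_def)
  have cc: "compact (closure \<Omega>)" using bd by (simp add: compact_closure)
  have ne: "closure \<Omega> \<noteq> {}" using x by auto
  have ct: "continuous_on (closure \<Omega>) (\<lambda>y. z y - W y)"
    by (rule continuous_on_diff[OF zc continuous_on_subset[OF Wc subset_UNIV]])
  obtain p where p: "p \<in> closure \<Omega>" "\<And>y. y \<in> closure \<Omega> \<Longrightarrow> z p - W p \<le> z y - W y"
    using continuous_attains_inf[OF cc ne ct] by blast
  show ?thesis
  proof (cases "p \<in> frontier \<Omega>")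
    case True
    then have "z p - W p \<ge> 0" using zg gW by simp
    then show ?thesis using p(2)[OF x] by linarith
  next
    case False
    with p(1) closure_sub have pin: "p \<in> \<Omega>" by blast
    let ?c = "z p - W p"
    have "C2_with (\<lambda>y. W y + ?c) G H" by (rule C2_add_const[OF W])
    moreover have "\<exists>e>0. \<forall>y\<in>\<Omega>. dist y p < e \<longrightarrow> z y - (W y + ?c) \<ge> z p - (W p + ?c)"
    proof (intro exI[of _ 1] conjI ballI impI)
      fix y assume "y \<in> \<Omega>"
      then have "y \<in> closure \<Omega>" using closure_subset by blast
      from p(2)[OF this] show "z y - (W y + ?c) \<ge> z p - (W p + ?c)" by simp
    qed simp
    moreover have "\<And>\<phi> G H. C2_with \<phi> G H \<Longrightarrow> (\<exists>e>0. \<forall>y\<in>\<Omega>. dist y p < e \<longrightarrow> z y - \<phi> y \<ge> z p - \<phi> p) \<Longrightarrow> lambda_j j (H p) \<le> 0"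
      using sup pin unfolding visc_super_ell_def by blast
    ultimately have L1: "lambda_j j (H p) \<le> 0" by blast
    have L2: "lambda_j j (H p) > 0" using pos pin by blast
    show ?thesis using L1 L2 by linarith
  qed
qed

lemma parabolic_lower:
  fixes \<Omega> Op Kc :: "(real^'n) set"
  assumes sup: "visc_super_par j \<Omega> u"
    and uc: "continuous_on (closure \<Omega> \<times> {0..}) (\<lambda>(x,t). u x t)"
    and Kc: "compact Kc" "Kc \<subseteq> closure \<Omega>"
    and Op: "open Op" "Op \<subseteq> Kc" "Op \<subseteq> \<Omega>"
    and psi: "C21_with \<psi> G H T"
    and eq: "\<And>x t. x \<in> Op \<Longrightarrow> t > 0 \<Longrightarrow> T x t - lambda_j j (H x t) \<le> 0"
    and bdry: "\<And>x t. x \<in> Kc - Op \<Longrightarrow> t > 0 \<Longrightarrow> \<psi> x t \<le> u x t"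
    and init: "\<And>x. x \<in> Kc \<Longrightarrow> \<psi> x 0 \<le> u x 0"
    and x1: "x1 \<in> Kc" and t1: "t1 \<ge> 0"
  shows "\<psi> x1 t1 \<le> u x1 t1"
proof (rule ccontr)
  assume "\<not> \<psi> x1 t1 \<le> u x1 t1"
  define a where "a = \<psi> x1 t1 - u x1 t1"
  have a: "a > 0" using \<open>\<not> \<psi> x1 t1 \<le> u x1 t1\<close> a_def by simp
  define T1 where "T1 = t1 + 1"
  define w where "w = (\<lambda>x t. u x t - \<psi> x t)"
  have psic: "continuous_on UNIV (\<lambda>(x,t). \<psi> x t)" using psi unfolding C21_with_def by blast
  have wc: "continuous_on (Kc \<times> {0..T1}) (\<lambda>p. w (fst p) (snd p))"
  proof -
    have "continuous_on (Kc \<times> {0..T1}) (\<lambda>(x,t). u x t)"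
      by (rule continuous_on_subset[OF uc]) (use Kc in auto)
    moreover have "continuous_on (Kc \<times> {0..T1}) (\<lambda>(x,t). \<psi> x t)"
      by (rule continuous_on_subset[OF psic]) auto
    ultimately show ?thesis unfolding w_def case_prod_beta by (rule continuous_on_diff)
  qed
  have cw: "continuous_on (Kc \<times> {T1}) (\<lambda>p. w (fst p) (snd p))"
    by (rule continuous_on_subset[OF wc]) (auto simp: T1_def t1)
  have cK: "compact (Kc \<times> {T1})" using Kc by (intro compact_Times) auto
  have neK: "Kc \<times> {T1} \<noteq> {}" using x1 by auto
  obtain q where q1: "q \<in> Kc \<times> {T1}" and q2: "\<And>y. y \<in> Kc \<times> {T1} \<Longrightarrow> w (fst q) (snd q) \<le> w (fst y) (snd y)"
    using continuous_attains_inf[OF cK neK cw] by blast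
  define m where "m = w (fst q) (snd q)"
  have m: "m \<le> w x T1" if "x \<in> Kc" for x
  proof -
    have "(x, T1) \<in> Kc \<times> {T1}" using that by simp
    from q2[OF this] show ?thesis by (simp add: m_def)
  qed
  define \<beta> where "\<beta> = a / 2"
  have \<beta>: "\<beta> > 0" using a by (simp add: \<beta>_def)
  define lam where "lam = (\<bar>m\<bar> + a) / \<beta>"
  have lam: "lam > 0" using a \<beta> by (simp add: lam_def)
  define v where "v = (\<lambda>x t. w x t + \<beta> * exp (lam * (t - t1)))"
  have vc: "continuous_on (Kc \<times> {0..T1}) (\<lambda>p. v (fst p) (snd p))"
    unfolding v_def by (intro continuous_on_add wc continuous_intros)
  have cK2: "compact (Kc \<times> {0..T1})" using Kc by (intro compact_Times) auto
  have neK2: "Kc \<times> {0..T1} \<noteq> {}" using x1 t1 by (auto simp: T1_def)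
  obtain pq where pq: "pq \<in> Kc \<times> {0..T1}"
    "\<And>y. y \<in> Kc \<times> {0..T1} \<Longrightarrow> v (fst pq) (snd pq) \<le> v (fst y) (snd y)"
    using continuous_attains_inf[OF cK2 neK2 vc] by blast
  define p where "p = fst pq"
  define s where "s = snd pq"
  have p: "p \<in> Kc" and s: "0 \<le> s" "s \<le> T1" using pq(1) by (auto simp: p_def s_def)
  have vmin: "\<And>y r. y \<in> Kc \<Longrightarrow> 0 \<le> r \<Longrightarrow> r \<le> T1 \<Longrightarrow> v p s \<le> v y r"
    using pq(2) unfolding p_def s_def by force
  have "v p s \<le> v x1 t1" using vmin[OF x1 t1] by (simp add: T1_def)
  also have "v x1 t1 = - a / 2" by (simp add: v_def w_def a_def \<beta>_def field_simps)
  finally have vneg: "v p s < 0" using a by simp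
  have pos_exp: "\<beta> * exp (lam * (t - t1)) > 0" for t using \<beta> by simp
  have "s \<noteq> 0"
  proof
    assume "s = 0"
    then have "w p s \<ge> 0" using init[OF p] by (simp add: w_def)
    then show False using vneg pos_exp[of s] by (simp add: v_def)
  qed
  moreover have "s \<noteq> T1"
  proof
    assume sT: "s = T1"
    have "exp (lam * (T1 - t1)) \<ge> 1 + lam" using exp_ge_add_one_self[of lam] by (simp add: T1_def)
    then have "\<beta> * exp (lam * (T1 - t1)) \<ge> \<beta> * (1 + lam)" using \<beta> by simp
    also have "\<beta> * (1 + lam) = \<beta> + \<bar>m\<bar> + a" using \<beta> by (simp add: lam_def field_simps)
    finally have "v p s \<ge> m + \<beta> + \<bar>m\<bar> + a" using m[OF p] sT by (simp add: v_def)
    then show False using vneg \<beta> a by linarith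
  qed
  moreover have "p \<in> Op"
  proof (rule ccontr)
    assume "p \<notin> Op"
    then have "w p s \<ge> 0" using bdry[of p s] p s \<open>s \<noteq> 0\<close> by (simp add: w_def)
    then show False using vneg pos_exp[of s] by (simp add: v_def)
  qed
  ultimately have s0: "0 < s" "s < T1" and pO: "p \<in> Op" using s by auto
  obtain e1 where e1: "e1 > 0" "ball p e1 \<subseteq> Op" using Op(1) pO open_contains_ball by blast
  define e where "e = min e1 (min s (T1 - s))"
  have e: "e > 0" using e1 s0 by (simp add: e_def)
  define c where "c = v p s"
  define \<phi> where "\<phi> = (\<lambda>y r. \<psi> y r + (- \<beta> * exp (lam * (r - t1)) + c))"
  have phiC: "C21_with \<phi> G H (\<lambda>y r. T y r + (- \<beta> * lam * exp (lam * (r - t1))))"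
    unfolding \<phi>_def
  proof (rule C21_add_time[OF psi])
    show "((\<lambda>r. - \<beta> * exp (lam * (r - t1)) + c) has_real_derivative - \<beta> * lam * exp (lam * (t - t1))) (at t)" for t
      by (auto intro!: derivative_eq_intros)
    show "continuous_on UNIV (\<lambda>t. - \<beta> * lam * exp (lam * (t - t1)))"
      by (intro continuous_intros)
  qed
  have touch: "\<exists>e>0. \<forall>y\<in>\<Omega>. \<forall>r>0. dist y p < e \<and> \<bar>r - s\<bar> < e \<longrightarrow> u y r - \<phi> y r \<ge> u p s - \<phi> p s"
  proof (intro exI[of _ e] conjI ballI allI impI)
    show "e > 0" by (rule e)
    fix y r assume y: "y \<in> \<Omega>" and r: "r > 0" and yr: "dist y p < e \<and> \<bar>r - s\<bar> < e"
    have "y \<in> ball p e1" using yr by (simp add: e_def dist_commute)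
    then have yK: "y \<in> Kc" using e1 Op(2) by blast
    have "r \<le> T1" using yr by (simp add: e_def abs_less_iff)
    then have "v p s \<le> v y r" using vmin[OF yK] r by simp
    then show "u y r - \<phi> y r \<ge> u p s - \<phi> p s"
      by (simp add: \<phi>_def v_def w_def c_def)
  qed
  have pO': "p \<in> \<Omega>" using pO Op(3) by blast
  have "T p s + (- \<beta> * lam * exp (lam * (s - t1))) - lambda_j j (H p s) \<ge> 0"
    using sup pO' s0(1) phiC touch unfolding visc_super_par_def by blast
  moreover have "\<beta> * lam * exp (lam * (s - t1)) > 0" using \<beta> lam by simp
  ultimately show False using eq[OF pO s0(1)] by linarith
qed


lemma parabolic_upper:
  fixes \<Omega> Op Kc :: "(real^'n) set"
  assumes sub: "visc_sub_par j \<Omega> u"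
    and uc: "continuous_on (closure \<Omega> \<times> {0..}) (\<lambda>(x,t). u x t)"
    and Kc: "compact Kc" "Kc \<subseteq> closure \<Omega>"
    and Op: "open Op" "Op \<subseteq> Kc" "Op \<subseteq> \<Omega>"
    and psi: "C21_with \<psi> G H T"
    and eq: "\<And>x t. x \<in> Op \<Longrightarrow> t > 0 \<Longrightarrow> T x t - lambda_j j (H x t) \<ge> 0"
    and bdry: "\<And>x t. x \<in> Kc - Op \<Longrightarrow> t > 0 \<Longrightarrow> u x t \<le> \<psi> x t"
    and init: "\<And>x. x \<in> Kc \<Longrightarrow> u x 0 \<le> \<psi> x 0"
    and x1: "x1 \<in> Kc" and t1: "t1 \<ge> 0"
  shows "u x1 t1 \<le> \<psi> x1 t1"
proof (rule ccontr)
  assume "\<not> u x1 t1 \<le> \<psi> x1 t1"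
  define a where "a = u x1 t1 - \<psi> x1 t1"
  have a: "a > 0" using \<open>\<not> u x1 t1 \<le> \<psi> x1 t1\<close> a_def by simp
  define T1 where "T1 = t1 + 1"
  define w where "w = (\<lambda>x t. \<psi> x t - u x t)"
  have psic: "continuous_on UNIV (\<lambda>(x,t). \<psi> x t)" using psi unfolding C21_with_def by blast
  have wc: "continuous_on (Kc \<times> {0..T1}) (\<lambda>p. w (fst p) (snd p))"
  proof -
    have "continuous_on (Kc \<times> {0..T1}) (\<lambda>(x,t). u x t)"
      by (rule continuous_on_subset[OF uc]) (use Kc in auto)
    moreover have "continuous_on (Kc \<times> {0..T1}) (\<lambda>(x,t). \<psi> x t)"
      by (rule continuous_on_subset[OF psic]) auto
    ultimately show ?thesis unfolding w_def case_prod_beta by (intro continuous_on_diff)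
  qed
  have cw: "continuous_on (Kc \<times> {T1}) (\<lambda>p. w (fst p) (snd p))"
    by (rule continuous_on_subset[OF wc]) (auto simp: T1_def t1)
  have cK: "compact (Kc \<times> {T1})" using Kc by (intro compact_Times) auto
  have neK: "Kc \<times> {T1} \<noteq> {}" using x1 by auto
  obtain q where q1: "q \<in> Kc \<times> {T1}" and q2: "\<And>y. y \<in> Kc \<times> {T1} \<Longrightarrow> w (fst q) (snd q) \<le> w (fst y) (snd y)"
    using continuous_attains_inf[OF cK neK cw] by blast
  define m where "m = w (fst q) (snd q)"
  have m: "m \<le> w x T1" if "x \<in> Kc" for x
  proof -
    have "(x, T1) \<in> Kc \<times> {T1}" using that by simp
    from q2[OF this] show ?thesis by (simp add: m_def)
  qed
  define \<beta> where "\<beta> = a / 2"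
  have \<beta>: "\<beta> > 0" using a by (simp add: \<beta>_def)
  define lam where "lam = (\<bar>m\<bar> + a) / \<beta>"
  have lam: "lam > 0" using a \<beta> by (simp add: lam_def)
  define v where "v = (\<lambda>x t. w x t + \<beta> * exp (lam * (t - t1)))"
  have vc: "continuous_on (Kc \<times> {0..T1}) (\<lambda>p. v (fst p) (snd p))"
    unfolding v_def by (intro continuous_on_add wc continuous_intros)
  have cK2: "compact (Kc \<times> {0..T1})" using Kc by (intro compact_Times) auto
  have neK2: "Kc \<times> {0..T1} \<noteq> {}" using x1 t1 by (auto simp: T1_def)
  obtain pq where pq: "pq \<in> Kc \<times> {0..T1}"
    "\<And>y. y \<in> Kc \<times> {0..T1} \<Longrightarrow> v (fst pq) (snd pq) \<le> v (fst y) (snd y)"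
    using continuous_attains_inf[OF cK2 neK2 vc] by blast
  define p where "p = fst pq"
  define s where "s = snd pq"
  have p: "p \<in> Kc" and s: "0 \<le> s" "s \<le> T1" using pq(1) by (auto simp: p_def s_def)
  have vmin: "\<And>y r. y \<in> Kc \<Longrightarrow> 0 \<le> r \<Longrightarrow> r \<le> T1 \<Longrightarrow> v p s \<le> v y r"
    using pq(2) unfolding p_def s_def by force
  have "v p s \<le> v x1 t1" using vmin[OF x1 t1] by (simp add: T1_def)
  also have "v x1 t1 = - a / 2" by (simp add: v_def w_def a_def \<beta>_def field_simps)
  finally have vneg: "v p s < 0" using a by simp
  have pos_exp: "\<beta> * exp (lam * (t - t1)) > 0" for t using \<beta> by simp
  have "s \<noteq> 0"
  proof
    assume "s = 0"
    then have "w p s \<ge> 0" using init[OF p] by (simp add: w_def)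
    then show False using vneg pos_exp[of s] by (simp add: v_def)
  qed
  moreover have "s \<noteq> T1"
  proof
    assume sT: "s = T1"
    have "exp (lam * (T1 - t1)) \<ge> 1 + lam" using exp_ge_add_one_self[of lam] by (simp add: T1_def)
    then have "\<beta> * exp (lam * (T1 - t1)) \<ge> \<beta> * (1 + lam)" using \<beta> by simp
    also have "\<beta> * (1 + lam) = \<beta> + \<bar>m\<bar> + a" using \<beta> by (simp add: lam_def field_simps)
    finally have "v p s \<ge> m + \<beta> + \<bar>m\<bar> + a" using m[OF p] sT by (simp add: v_def)
    then show False using vneg \<beta> a by linarith
  qed
  moreover have "p \<in> Op"
  proof (rule ccontr)
    assume "p \<notin> Op"
    then have "w p s \<ge> 0" using bdry[of p s] p s \<open>s \<noteq> 0\<close> by (simp add: w_def)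
    then show False using vneg pos_exp[of s] by (simp add: v_def)
  qed
  ultimately have s0: "0 < s" "s < T1" and pO: "p \<in> Op" using s by auto
  obtain e1 where e1: "e1 > 0" "ball p e1 \<subseteq> Op" using Op(1) pO open_contains_ball by blast
  define e where "e = min e1 (min s (T1 - s))"
  have e: "e > 0" using e1 s0 by (simp add: e_def)
  define c where "c = v p s"
  define \<phi> where "\<phi> = (\<lambda>y r. \<psi> y r + (\<beta> * exp (lam * (r - t1)) - c))"
  have phiC: "C21_with \<phi> G H (\<lambda>y r. T y r + (\<beta> * lam * exp (lam * (r - t1))))"
    unfolding \<phi>_def
  proof (rule C21_add_time[OF psi])
    show "((\<lambda>r. \<beta> * exp (lam * (r - t1)) - c) has_real_derivative \<beta> * lam * exp (lam * (t - t1))) (at t)" for t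
      by (auto intro!: derivative_eq_intros)
    show "continuous_on UNIV (\<lambda>t. \<beta> * lam * exp (lam * (t - t1)))"
      by (intro continuous_intros)
  qed
  have touch: "\<exists>e>0. \<forall>y\<in>\<Omega>. \<forall>r>0. dist y p < e \<and> \<bar>r - s\<bar> < e \<longrightarrow> u y r - \<phi> y r \<le> u p s - \<phi> p s"
  proof (intro exI[of _ e] conjI ballI allI impI)
    show "e > 0" by (rule e)
    fix y r assume y: "y \<in> \<Omega>" and r: "r > 0" and yr: "dist y p < e \<and> \<bar>r - s\<bar> < e"
    have "y \<in> ball p e1" using yr by (simp add: e_def dist_commute)
    then have yK: "y \<in> Kc" using e1 Op(2) by blast
    have "r \<le> T1" using yr by (simp add: e_def abs_less_iff)
    then have "v p s \<le> v y r" using vmin[OF yK] r by simp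
    then show "u y r - \<phi> y r \<le> u p s - \<phi> p s"
      by (simp add: \<phi>_def v_def w_def c_def)
  qed
  have pO': "p \<in> \<Omega>" using pO Op(3) by blast
  have "T p s + (\<beta> * lam * exp (lam * (s - t1))) - lambda_j j (H p s) \<le> 0"
    using sub pO' s0(1) phiC touch unfolding visc_sub_par_def by blast
  moreover have "\<beta> * lam * exp (lam * (s - t1)) > 0" using \<beta> lam by simp
  ultimately show False using eq[OF pO s0(1)] by linarith
qed

lemma quadf_add: "quadf (\<lambda>i. c1 i + c2 i) x0 x = quadf c1 x0 x + quadf c2 x0 x"
  unfolding quadf_def by (simp add: sum.distrib algebra_simps)

lemma quadf_scale: "quadf (\<lambda>i. k * c i) x0 x = k * quadf c x0 x"
  unfolding quadf_def by (simp add: sum_distrib_left algebra_simps)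

lemma norm_sq_sum: "(norm (x - x0))^2 = (\<Sum>i\<in>UNIV. (x$i - x0$i)^2)"
  unfolding power2_norm_eq_inner inner_vec_def by (simp add: power2_eq_square)

lemma quadf_const: "quadf (\<lambda>i. k) x0 x = k * (norm (x - x0))^2"
  unfolding quadf_def norm_sq_sum by (simp add: sum_distrib_left)

lemma quadf_at: "quadf c x0 x0 = 0"
  unfolding quadf_def by simp

lemma quadf_cont: "continuous_on S (quadf c x0)"
  unfolding quadf_def by (intro continuous_intros)

lemma quadf_nonneg: "(\<And>i. c i \<ge> 0) \<Longrightarrow> quadf c x0 x \<ge> 0"
  unfolding quadf_def by (intro sum_nonneg) simp

lemma norm_split: "(norm (x - x0))^2 = (x$i1 - x0$i1)^2 + quadf (\<lambda>i. if i = i1 then 0 else 1) x0 x"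
proof -
  let ?f = "\<lambda>i. (x$i - x0$i)^2"
  have "quadf (\<lambda>i. if i = i1 then 0 else 1) x0 x = (\<Sum>i\<in>UNIV. if i = i1 then 0 else ?f i)"
    unfolding quadf_def by (intro sum.cong) auto
  also have "\<dots> = 0 + (\<Sum>i\<in>UNIV - {i1}. if i = i1 then 0 else ?f i)"
    by (subst sum.remove[of UNIV i1]) auto
  also have "\<dots> = (\<Sum>i\<in>UNIV - {i1}. ?f i)" unfolding add_0_left by (rule sum.cong) auto
  finally have A: "quadf (\<lambda>i. if i = i1 then 0 else 1) x0 x = (\<Sum>i\<in>UNIV - {i1}. ?f i)" .
  have "(norm (x - x0))^2 = ?f i1 + (\<Sum>i\<in>UNIV - {i1}. ?f i)"
    unfolding norm_sq_sum by (subst sum.remove[of UNIV i1]) auto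
  then show ?thesis using A by simp
qed

lemma Dg_quad: "(Dg d *v v) \<bullet> v = (\<Sum>i\<in>UNIV. d i * (v$i * v$i))"
  by (simp add: inner_vec_def algebra_simps)

lemma lambda_Dg_lower:
  fixes d :: "'n::finite \<Rightarrow> real"
  assumes "card I = CARD('n) + 1 - j" "1 \<le> j" "j \<le> CARD('n)" "\<And>i. i \<in> I \<Longrightarrow> c \<le> d i"
  shows "c \<le> lambda_j j (Dg d)"
proof (rule lambda_lower)
  show "subspace (CS I)" by (rule subspace_CS)
  show "dim (CS I) = CARD('n) + 1 - j" using assms(1) by (simp only: dim_CS)
  fix v :: "real^'n" assume v: "v \<in> CS I"
  have "c * (v \<bullet> v) = (\<Sum>i\<in>UNIV. c * (v$i * v$i))" by (simp add: inner_vec_def sum_distrib_left)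
  also have "\<dots> \<le> (\<Sum>i\<in>UNIV. d i * (v$i * v$i))"
  proof (rule sum_mono)
    fix i show "c * (v$i * v$i) \<le> d i * (v$i * v$i)"
    proof (cases "i \<in> I")
      case True then show ?thesis using assms(4) by (intro mult_right_mono) auto
    next
      case False then have "v$i = 0" using v by (simp add: CS_def)
      then show ?thesis by simp
    qed
  qed
  finally show "c * (v \<bullet> v) \<le> (Dg d *v v) \<bullet> v" by (simp add: Dg_quad)
qed (use assms in auto)

lemma lambda_Dg_upper:
  fixes d :: "'n::finite \<Rightarrow> real"
  assumes "card I = j" "1 \<le> j" "\<And>i. i \<in> I \<Longrightarrow> d i \<le> c"
  shows "lambda_j j (Dg d) \<le> c"
proof (rule lambda_upper)
  show "subspace (CS I)" by (rule subspace_CS)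
  show "dim (CS I) = j" using assms(1) by (simp only: dim_CS)
  fix v :: "real^'n" assume v: "v \<in> CS I"
  have "(\<Sum>i\<in>UNIV. d i * (v$i * v$i)) \<le> (\<Sum>i\<in>UNIV. c * (v$i * v$i))"
  proof (rule sum_mono)
    fix i show "d i * (v$i * v$i) \<le> c * (v$i * v$i)"
    proof (cases "i \<in> I")
      case True then show ?thesis using assms(3) by (intro mult_right_mono) auto
    next
      case False then have "v$i = 0" using v by (simp add: CS_def)
      then show ?thesis by simp
    qed
  qed
  also have "\<dots> = c * (v \<bullet> v)" by (simp add: inner_vec_def sum_distrib_left)
  finally show "(Dg d *v v) \<bullet> v \<le> c * (v \<bullet> v)" by (simp add: Dg_quad)
qed (use assms in auto)

lemma u_frontier0:
  fixes u :: "'a::topological_space \<Rightarrow> real \<Rightarrow> real"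
  assumes uc: "continuous_on (closure \<Omega> \<times> {0..}) (\<lambda>(x,t). u x t)"
    and ug: "\<forall>x\<in>frontier \<Omega>. \<forall>t>0. u x t = g x"
    and x: "x \<in> frontier \<Omega>"
  shows "u x 0 = g x"
proof -
  have xc: "x \<in> closure \<Omega>" using x by (simp add: frontier_def)
  have "continuous_on {0..} (\<lambda>t::real. (x, t))" by (intro continuous_intros)
  from continuous_on_compose2[OF uc this] xc
  have "continuous_on {0..} (\<lambda>t. u x t)" by auto
  then have "((\<lambda>t. u x t) \<longlongrightarrow> u x 0) (at 0 within {0..})"
    unfolding continuous_on_def by simp
  then have L1: "((\<lambda>t. u x t) \<longlongrightarrow> u x 0) (at_right 0)"
    by (rule tendsto_within_subset) auto
  have "eventually (\<lambda>t. u x t = g x) (at_right (0::real))"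
    unfolding eventually_at_right_field using ug x by (intro exI[of _ 1]) auto
  then have L2: "((\<lambda>t. u x t) \<longlongrightarrow> g x) (at_right 0)"
    by (rule tendsto_eventually)
  show ?thesis using tendsto_unique[OF _ L1 L2] trivial_limit_at_right_real by blast
qed

lemma C21_lin:
  fixes i1 :: "'n::finite" and cc :: "'n \<Rightarrow> real"
  shows "C21_with (\<lambda>x t. quadf cc x0 x + (\<alpha> + \<beta> * t))
     (\<lambda>x t. \<chi> i. 2 * cc i * (x$i - x0$i))
     (\<lambda>x t. Dg (\<lambda>i. 2 * cc i))
     (\<lambda>x t. \<beta>)"
proof -
  have "C21_with (\<lambda>x t. quadf cc x0 x + (\<lambda>s t. \<alpha> + \<beta> * t) (x$i1) t)
     (\<lambda>x t. \<chi> i. 2 * cc i * (x$i - x0$i) + (if i = i1 then (\<lambda>s t. 0) (x$i1) t else 0))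
     (\<lambda>x t. Dg (\<lambda>i. 2 * cc i + (if i = i1 then (\<lambda>s t. 0) (x$i1) t else 0)))
     (\<lambda>x t. (\<lambda>s t. \<beta>) (x$i1) t)"
  proof (rule C21_sep)
    show "((\<lambda>s. \<alpha> + \<beta> * t) has_real_derivative 0) (at s)" for s t by (rule DERIV_const)
    show "((\<lambda>s. 0) has_real_derivative 0) (at s)" for s :: real and t :: real by (rule DERIV_const)
    show "((\<lambda>t. \<alpha> + \<beta> * t) has_real_derivative \<beta>) (at t)" for s t :: real
      by (auto intro!: derivative_eq_intros)
  qed (auto intro!: continuous_intros simp: case_prod_beta)
  then show ?thesis by simp
qed

lemma C2_const:
  "C2_with (\<lambda>x. quadf cc x0 x + \<alpha>) (\<lambda>x. \<chi> i. 2 * cc i * (x$i - x0$i)) (\<lambda>x. Dg (\<lambda>i. 2 * cc i))"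
proof (rule C21_to_C2)
  show "C21_with (\<lambda>x t. quadf cc x0 x + \<alpha>) (\<lambda>x t. \<chi> i. 2 * cc i * (x$i - x0$i)) (\<lambda>x t. Dg (\<lambda>i. 2 * cc i)) (\<lambda>x t. 0)"
    using C21_lin[of cc x0 \<alpha> 0] by simp
qed

lemma C21_cos:
  fixes ii :: "'n::finite" and cc :: "'n \<Rightarrow> real"
  shows "C21_with (\<lambda>x t. quadf cc cen x + A * (exp (- \<mu> * t) * cos (a * (x$ii - c))))
     (\<lambda>x t. \<chi> i. 2 * cc i * (x$i - cen$i) + (if i = ii then - A * a * (exp (- \<mu> * t) * sin (a * (x$ii - c))) else 0))
     (\<lambda>x t. Dg (\<lambda>i. 2 * cc i + (if i = ii then - A * a^2 * (exp (- \<mu> * t) * cos (a * (x$ii - c))) else 0)))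
     (\<lambda>x t. - \<mu> * A * (exp (- \<mu> * t) * cos (a * (x$ii - c))))"
proof (rule C21_sep[where P="\<lambda>s t. A * (exp (- \<mu> * t) * cos (a * (s - c)))"
      and Pd="\<lambda>s t. - A * a * (exp (- \<mu> * t) * sin (a * (s - c)))"
      and Pdd="\<lambda>s t. - A * a^2 * (exp (- \<mu> * t) * cos (a * (s - c)))"
      and Pt="\<lambda>s t. - \<mu> * A * (exp (- \<mu> * t) * cos (a * (s - c)))"])
  show "((\<lambda>s. A * (exp (- \<mu> * t) * cos (a * (s - c)))) has_real_derivative - A * a * (exp (- \<mu> * t) * sin (a * (s - c)))) (at s)" for s t
    by (auto intro!: derivative_eq_intros simp: algebra_simps)
  show "((\<lambda>s. - A * a * (exp (- \<mu> * t) * sin (a * (s - c)))) has_real_derivative - A * a^2 * (exp (- \<mu> * t) * cos (a * (s - c)))) (at s)" for s t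
    by (auto intro!: derivative_eq_intros simp: algebra_simps power2_eq_square)
  show "((\<lambda>t. A * (exp (- \<mu> * t) * cos (a * (s - c)))) has_real_derivative - \<mu> * A * (exp (- \<mu> * t) * cos (a * (s - c)))) (at t)" for s t
    by (auto intro!: derivative_eq_intros simp: algebra_simps)
qed (auto intro!: continuous_intros simp: case_prod_beta)

theorem theorem3p5:
  fixes \<Omega> :: "(real^'n) set" and j :: nat and x0 :: "real^'n"
  assumes "open \<Omega>" and "connected \<Omega>" and "bounded \<Omega>"
    and "1 \<le> j" and "j \<le> CARD('n)"
    and "x0 \<in> \<Omega>"
  shows "(\<exists>g u0 \<mu>1 k.
            continuous_on (frontier \<Omega>) g \<and> continuous_on (closure \<Omega>) u0 \<and>
            (\<forall>x\<in>frontier \<Omega>. u0 x = g x) \<and> \<mu>1 > 0 \<and> k > 0 \<and>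
            (\<forall>u z. parabolic_solution j \<Omega> g u0 u \<longrightarrow> elliptic_solution j \<Omega> g z \<longrightarrow>
               (\<forall>t>0. u x0 t \<ge> z x0 + k * exp (- \<mu>1 * t))))
       \<and> (\<exists>g u0 \<mu>1 k.
            continuous_on (frontier \<Omega>) g \<and> continuous_on (closure \<Omega>) u0 \<and>
            (\<forall>x\<in>frontier \<Omega>. u0 x = g x) \<and> \<mu>1 > 0 \<and> k > 0 \<and>
            (\<forall>u z. parabolic_solution j \<Omega> g u0 u \<longrightarrow> elliptic_solution j \<Omega> g z \<longrightarrow>
               (\<forall>t>0. u x0 t \<le> z x0 - k * exp (- \<mu>1 * t))))"
proof -
  note opn = assms(1) and bdd = assms(3) and j1 = assms(4) and jN = assms(5) and x0 = assms(6)
  obtain r0 where r0: "r0 > 0" "ball x0 r0 \<subseteq> \<Omega>" using opn x0 open_contains_ball by blast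
  define \<rho> where "\<rho> = r0 / 3"
  have \<rho>: "\<rho> > 0" using r0 by (simp add: \<rho>_def)
  have ball3: "ball x0 (3 * \<rho>) \<subseteq> \<Omega>" using r0 by (simp add: \<rho>_def)
  obtain R0 where R0: "\<forall>y\<in>closure \<Omega>. dist x0 y \<le> R0"
    using bounded_closure[OF bdd] bounded_any_center by blast
  define R where "R = max 1 R0"
  have R: "R > 0" by (simp add: R_def)
  have Rn: "norm (x - x0) \<le> R" if "x \<in> closure \<Omega>" for x
    using R0 that by (fastforce simp: R_def dist_norm norm_minus_commute)
  have Rn2: "(norm (x - x0))^2 \<le> R^2" if "x \<in> closure \<Omega>" for x
    using Rn[OF that] by (simp add: power_mono)
  have front_not: "x \<notin> \<Omega>" if "x \<in> frontier \<Omega>" for x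
    using that opn by (simp add: frontier_def interior_open)
  have front_cl: "x \<in> closure \<Omega>" if "x \<in> frontier \<Omega>" for x
    using that by (simp add: frontier_def)
  have cl_split: "x \<in> \<Omega> \<or> x \<in> frontier \<Omega>" if "x \<in> closure \<Omega>" for x
    using that closure_sub by blast
  define i1 :: 'n where "i1 = undefined"
  have "j - 1 \<le> card (UNIV - {i1})" using jN by (simp add: card_Diff_singleton)
  then obtain K where K: "K \<subseteq> UNIV - {i1}" "card K = j - 1" "finite K"
    by (rule obtain_subset_with_card_n)
  define L where "L = UNIV - insert i1 K"
  have i1K: "i1 \<notin> K" using K by blast
  have i1L: "i1 \<notin> L" by (simp add: L_def)
  have KL: "i \<notin> L" if "i \<in> K" for i using that by (simp add: L_def)
  have cardK: "card (insert i1 K) = j" using K i1K j1 by simp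
  have cardL0: "card L = CARD('n) - j"
    unfolding L_def using cardK by (simp add: card_Diff_subset)
  have cardL: "card (insert i1 L) = CARD('n) + 1 - j"
    using cardL0 i1L jN by simp
  define M where "M = 1 / \<rho>^2"
  have M: "M > 0" using \<rho> by (simp add: M_def)
  define ch where "ch = (\<lambda>i. if i \<in> K then - M else if i \<in> L then M else 0)"
  have ch_i1: "ch i1 = 0" using i1K i1L by (simp add: ch_def)
  have ch_K: "ch i = - M" if "i \<in> K" for i using that by (simp add: ch_def)
  have ch_L: "ch i = M" if "i \<in> L" for i using that KL by (auto simp: ch_def)
  have chle: "ch i \<le> 0" if "i \<in> insert i1 K" for i using that ch_i1 ch_K M by auto
  have chge: "ch i \<ge> 0" if "i \<in> insert i1 L" for i using that ch_i1 ch_L M by auto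
  define h where "h = quadf ch x0"
  define e1 :: "'n \<Rightarrow> real" where "e1 = (\<lambda>i. if i = i1 then 0 else 1)"
  define qd where "qd = quadf e1 x0"
  have qd_nn: "qd x \<ge> 0" for x unfolding qd_def e1_def by (rule quadf_nonneg) simp
  have nsplit: "(norm (x - x0))^2 = (x$i1 - x0$i1)^2 + qd x" for x
    unfolding qd_def e1_def by (rule norm_split)
  define a where "a = pi / (2 * \<rho>)"
  have a: "a > 0" using \<rho> by (simp add: a_def)
  have a\<rho>: "a * \<rho> = pi / 2" using \<rho> by (simp add: a_def)
  define \<mu> where "\<mu> = a^2"
  have \<mu>: "\<mu> > 0" using a by (simp add: \<mu>_def)
  define bump where "bump = (\<lambda>x. max 0 (min 1 (3 - dist x x0 / \<rho>)))"
  have bump_cont: "continuous_on S bump" for S unfolding bump_def using \<rho> by (intro continuous_intros) auto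
  have bump_nn: "0 \<le> bump x" for x by (simp add: bump_def)
  have bump_front: "bump x = 0" if "x \<in> frontier \<Omega>" for x
  proof -
    have "x \<notin> ball x0 (3 * \<rho>)" using ball3 front_not[OF that] by blast
    then have "dist x x0 \<ge> 3 * \<rho>" by (simp add: dist_commute)
    then have "dist x x0 / \<rho> \<ge> 3" using \<rho> by (simp add: field_simps)
    then show ?thesis by (simp add: bump_def)
  qed
  define Kc where "Kc = {x. \<bar>x$i1 - x0$i1\<bar> \<le> \<rho>} \<inter> {x. qd x \<le> \<rho>^2}"
  define Op where "Op = {x. \<bar>x$i1 - x0$i1\<bar> < \<rho>} \<inter> {x. qd x < \<rho>^2}"
  have qd_cont: "continuous_on UNIV qd" unfolding qd_def by (rule quadf_cont)
  have Kc_norm: "norm (x - x0) \<le> 2 * \<rho>" if "x \<in> Kc" for x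
  proof -
    have "\<bar>x$i1 - x0$i1\<bar> \<le> \<rho>" using that unfolding Kc_def by simp
    then have "\<bar>x$i1 - x0$i1\<bar>^2 \<le> \<rho>^2" by (rule power_mono) simp
    then have "(x$i1 - x0$i1)^2 \<le> \<rho>^2" by simp
    moreover have "qd x \<le> \<rho>^2" using that unfolding Kc_def by simp
    moreover have "\<rho>^2 \<ge> 0" by simp
    ultimately have "(x$i1 - x0$i1)^2 + qd x \<le> 4 * \<rho>^2" by linarith
    then have "(norm (x - x0))^2 \<le> (2 * \<rho>)^2" using nsplit[of x]
      by (simp add: power_mult_distrib)
    then show ?thesis by (rule power2_le_imp_le) (use \<rho> in simp)
  qed
  have Kc_Omega: "Kc \<subseteq> \<Omega>"
  proof
    fix x assume "x \<in> Kc"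
    then have "norm (x - x0) \<le> 2 * \<rho>" by (rule Kc_norm)
    then have "dist x0 x < 3 * \<rho>" using \<rho> by (simp add: dist_norm norm_minus_commute)
    then show "x \<in> \<Omega>" using ball3 by auto
  qed
  have Kc_compact: "compact Kc"
    unfolding compact_eq_bounded_closed
  proof (intro conjI)
    have "Kc \<subseteq> cball x0 (2 * \<rho>)"
    proof
      fix x assume "x \<in> Kc"
      then have "norm (x - x0) \<le> 2 * \<rho>" by (rule Kc_norm)
      then show "x \<in> cball x0 (2 * \<rho>)" by (simp add: dist_norm norm_minus_commute)
    qed
    then show "bounded Kc" by (rule bounded_subset[OF bounded_cball])
    show "closed Kc" unfolding Kc_def
      by (intro closed_Int closed_Collect_le continuous_intros qd_cont)
  qed
  have Op_open: "open Op" unfolding Op_def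
    by (intro open_Int open_Collect_less continuous_intros qd_cont)
  have Op_Kc: "Op \<subseteq> Kc" unfolding Op_def Kc_def by auto
  have Op_Omega: "Op \<subseteq> \<Omega>" using Op_Kc Kc_Omega by blast
  have x0Kc: "x0 \<in> Kc" unfolding Kc_def qd_def using \<rho> by (simp add: quadf_at)
  have bump_Kc: "bump x = 1" if "x \<in> Kc" for x
  proof -
    have "dist x x0 \<le> 2 * \<rho>" using Kc_norm[OF that] by (simp add: dist_norm)
    then have "dist x x0 / \<rho> \<le> 2" using \<rho> by (simp add: field_simps)
    then show ?thesis by (simp add: bump_def)
  qed
  have cos_nn: "cos (a * (x$i1 - x0$i1)) \<ge> 0" if "x \<in> Kc" for x
  proof -
    have "\<bar>x$i1 - x0$i1\<bar> \<le> \<rho>" using that by (simp add: Kc_def)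
    then have "a * \<bar>x$i1 - x0$i1\<bar> \<le> a * \<rho>" using a by (intro mult_left_mono) auto
    moreover have "\<bar>a * (x$i1 - x0$i1)\<bar> = a * \<bar>x$i1 - x0$i1\<bar>" using a by (simp add: abs_mult)
    ultimately have "\<bar>a * (x$i1 - x0$i1)\<bar> \<le> pi / 2" using a\<rho> by simp
    then show ?thesis by (intro cos_ge_zero) (auto simp: abs_le_iff)
  qed
  have cos_edge: "cos (a * (x$i1 - x0$i1)) = 0 \<or> qd x \<ge> \<rho>^2" if "x \<in> Kc - Op" for x
  proof -
    have "\<bar>x$i1 - x0$i1\<bar> = \<rho> \<or> qd x \<ge> \<rho>^2" using that unfolding Kc_def Op_def by auto
    moreover have "cos (a * (x$i1 - x0$i1)) = 0" if "\<bar>x$i1 - x0$i1\<bar> = \<rho>"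
    proof -
      have "x$i1 - x0$i1 = \<rho> \<or> x$i1 - x0$i1 = - \<rho>" using that by linarith
      then have "a * (x$i1 - x0$i1) = a * \<rho> \<or> a * (x$i1 - x0$i1) = - (a * \<rho>)" by auto
      then have "a * (x$i1 - x0$i1) = pi / 2 \<or> a * (x$i1 - x0$i1) = - (pi / 2)"
        unfolding a\<rho> .
      then show ?thesis by (elim disjE) (simp_all only: cos_pi_half cos_minus)
    qed
    ultimately show ?thesis by blast
  qed
  have h_cont: "continuous_on S h" for S unfolding h_def by (rule quadf_cont)
  have h_x0: "h x0 = 0" unfolding h_def by (rule quadf_at)
  have exp_le1: "exp (- \<mu> * t) \<le> 1" if "t \<ge> 0" for t using \<mu> that by simp

  have exp_pos: "exp (- \<mu> * t) > 0" for t by simp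
  define c1 where "c1 = (\<lambda>i. ch i + (- (1 / \<rho>^2)) * e1 i)"
  define c2 where "c2 = (\<lambda>i. ch i + (1 / \<rho>^2) * e1 i)"
  have q1: "quadf c1 x0 x = h x + (- (1 / \<rho>^2)) * qd x" for x
    unfolding c1_def by (subst quadf_add, subst quadf_scale) (simp add: h_def qd_def)
  have q2: "quadf c2 x0 x = h x + (1 / \<rho>^2) * qd x" for x
    unfolding c2_def by (subst quadf_add, subst quadf_scale) (simp add: h_def qd_def)
  have c1_i1: "c1 i1 = 0" unfolding c1_def e1_def using ch_i1 by simp
  have c2_i1: "c2 i1 = 0" unfolding c2_def e1_def using ch_i1 by simp
  have c1_L: "c1 i = 0" if "i \<in> L" for i
    using that ch_L[OF that] i1L unfolding c1_def e1_def M_def by auto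
  have c2_K: "c2 i = 0" if "i \<in> K" for i
    using that ch_K[OF that] i1K unfolding c2_def e1_def M_def by auto
  have qd_div: "qd x / \<rho>^2 \<ge> 1" if "qd x \<ge> \<rho>^2" for x
    using that \<rho> by (simp add: field_simps)
  have qd_div0: "qd x / \<rho>^2 \<ge> 0" for x using qd_nn[of x] by simp
  have ecos_le1: "exp (- \<mu> * t) * cos (a * (x$i1 - x0$i1)) \<le> 1" if "t \<ge> 0" "x \<in> Kc" for t x
  proof -
    have "cos (a * (x$i1 - x0$i1)) \<le> 1" by simp
    then have "exp (- \<mu> * t) * cos (a * (x$i1 - x0$i1)) \<le> exp (- \<mu> * t) * 1"
      by (intro mult_left_mono) auto
    also have "\<dots> \<le> 1" using exp_le1[OF that(1)] by simp
    finally show ?thesis .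
  qed
  have ecos_nn: "exp (- \<mu> * t) * cos (a * (x$i1 - x0$i1)) \<ge> 0" if "x \<in> Kc" for t x
    using cos_nn[OF that] by simp
  have ecos_edge: "exp (- \<mu> * t) * cos (a * (x$i1 - x0$i1)) \<le> qd x / \<rho>^2" if "t \<ge> 0" "x \<in> Kc - Op" for t x
    using cos_edge[OF that(2)] ecos_le1[OF that(1)] that(2) qd_div qd_div0 by force
  have cK: "compact (closure \<Omega>)" using bdd by (simp add: compact_closure)
  have x0cl: "x0 \<in> closure \<Omega>" using x0 closure_subset by blast

  have main1: "u x0 t \<ge> z x0 + 1 * exp (- \<mu> * t)"
    if pu: "parabolic_solution j \<Omega> h (\<lambda>x. h x + bump x) u" and ez: "elliptic_solution j \<Omega> h z"
      and t: "t > 0" for u z t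
  proof -
    have uc: "continuous_on (closure \<Omega> \<times> {0..}) (\<lambda>(x,t). u x t)"
      and ug: "\<forall>x\<in>frontier \<Omega>. \<forall>t>0. u x t = h x"
      and u0: "\<forall>x\<in>\<Omega>. u x 0 = h x + bump x"
      and usup: "visc_super_par j \<Omega> u"
      using pu unfolding parabolic_solution_def by auto
    have zc: "continuous_on (closure \<Omega>) z" and zg: "\<forall>x\<in>frontier \<Omega>. z x = h x"
      and zsub: "visc_sub_ell j \<Omega> z"
      using ez unfolding elliptic_solution_def by auto
    have z0: "z x0 \<le> 0"
    proof (rule field_le_epsilon)
      fix e :: real assume e: "e > 0"
      define \<epsilon> where "\<epsilon> = e / R^2"
      have \<epsilon>: "\<epsilon> > 0" using e R by (simp add: \<epsilon>_def)
      have neg: "\<forall>x\<in>\<Omega>. lambda_j j (Dg (\<lambda>i. 2 * (ch i + - \<epsilon>))) < 0"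
      proof
        fix x assume "x \<in> \<Omega>"
        have "lambda_j j (Dg (\<lambda>i. 2 * (ch i + - \<epsilon>))) \<le> - 2 * \<epsilon>"
          by (rule lambda_Dg_upper[OF cardK j1]) (use chle in force)
        then show "lambda_j j (Dg (\<lambda>i. 2 * (ch i + - \<epsilon>))) < 0" using \<epsilon> by linarith
      qed
      have gW: "\<forall>x\<in>frontier \<Omega>. h x \<le> quadf (\<lambda>i. ch i + - \<epsilon>) x0 x + \<epsilon> * R^2"
      proof
        fix x assume xf: "x \<in> frontier \<Omega>"
        have "quadf (\<lambda>i. ch i + - \<epsilon>) x0 x = h x + (- \<epsilon>) * (norm (x - x0))^2"
          by (subst quadf_add, subst quadf_const) (simp add: h_def)
        moreover have "\<epsilon> * (norm (x - x0))^2 \<le> \<epsilon> * R^2"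
          using Rn2[OF front_cl[OF xf]] \<epsilon> by (intro mult_left_mono) auto
        ultimately show "h x \<le> quadf (\<lambda>i. ch i + - \<epsilon>) x0 x + \<epsilon> * R^2" by simp
      qed
      have "z x0 \<le> quadf (\<lambda>i. ch i + - \<epsilon>) x0 x0 + \<epsilon> * R^2"
        by (rule elliptic_upper[OF bdd zc zg zsub C2_const[of "\<lambda>i. ch i + - \<epsilon>" x0 "\<epsilon> * R^2"] neg gW x0cl])
      then show "z x0 \<le> 0 + e" using R by (simp add: quadf_at \<epsilon>_def)
    qed
    have uh: "h x \<le> u x s" if xs: "x \<in> closure \<Omega>" "s \<ge> 0" for x s
    proof (rule field_le_epsilon)
      fix e :: real assume e: "e > 0"
      define \<epsilon> where "\<epsilon> = e / (1 + s)"
      have \<epsilon>: "\<epsilon> > 0" using e xs by (simp add: \<epsilon>_def)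
      have eq: "\<And>x t. x \<in> \<Omega> \<Longrightarrow> t > 0 \<Longrightarrow> - \<epsilon> - lambda_j j (Dg (\<lambda>i. 2 * ch i)) \<le> 0"
      proof -
        have "0 \<le> lambda_j j (Dg (\<lambda>i. 2 * ch i))"
          by (rule lambda_Dg_lower[OF cardL j1 jN]) (use chge in force)
        then show "\<And>x t. - \<epsilon> - lambda_j j (Dg (\<lambda>i. 2 * ch i)) \<le> 0" using \<epsilon> by linarith
      qed
      have bdry: "\<And>x t. x \<in> closure \<Omega> - \<Omega> \<Longrightarrow> t > 0 \<Longrightarrow> quadf ch x0 x + (- \<epsilon> + - \<epsilon> * t) \<le> u x t"
      proof -
        fix x t assume x: "x \<in> closure \<Omega> - \<Omega>" and t: "(t::real) > 0"
        then have "x \<in> frontier \<Omega>" using cl_split by blast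
        then have "u x t = h x" using ug t by blast
        then show "quadf ch x0 x + (- \<epsilon> + - \<epsilon> * t) \<le> u x t" using \<epsilon> t
          by (simp add: h_def) (smt (verit) mult_pos_pos)
      qed
      have init: "\<And>x. x \<in> closure \<Omega> \<Longrightarrow> quadf ch x0 x + (- \<epsilon> + - \<epsilon> * 0) \<le> u x 0"
      proof -
        fix x assume x: "x \<in> closure \<Omega>"
        have "h x \<le> u x 0"
        proof (cases "x \<in> \<Omega>")
          case True then show ?thesis using u0 bump_nn[of x] by simp
        next
          case False then have "x \<in> frontier \<Omega>" using cl_split x by blast
          then show ?thesis using u_frontier0[OF uc ug] by simp
        qed
        then show "quadf ch x0 x + (- \<epsilon> + - \<epsilon> * 0) \<le> u x 0" using \<epsilon> by (simp add: h_def)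
      qed
      have "quadf ch x0 x + (- \<epsilon> + - \<epsilon> * s) \<le> u x s"
        by (rule parabolic_lower[where Kc="closure \<Omega>" and Op=\<Omega>, OF usup uc cK subset_refl opn closure_subset subset_refl
              C21_lin[of ch x0 "- \<epsilon>" "- \<epsilon>"] eq bdry init xs])
      moreover have "\<epsilon> + \<epsilon> * s = e"
      proof -
        have "\<epsilon> + \<epsilon> * s = \<epsilon> * (1 + s)" by (simp add: algebra_simps)
        also have "\<dots> = e" using xs by (simp add: \<epsilon>_def)
        finally show ?thesis .
      qed
      ultimately show "h x \<le> u x s + e" by (simp add: h_def)
    qed
    have loc: "exp (- \<mu> * t) \<le> u x0 t"
    proof -
      let ?H = "\<lambda>x t. Dg (\<lambda>i. 2 * c1 i + (if i = i1 then - 1 * a^2 * (exp (- \<mu> * t) * cos (a * (x$i1 - x0$i1))) else 0))"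
      have eq: "\<And>x t. x \<in> Op \<Longrightarrow> t > 0 \<Longrightarrow> - \<mu> * 1 * (exp (- \<mu> * t) * cos (a * (x$i1 - x0$i1))) - lambda_j j (?H x t) \<le> 0"
      proof -
        fix x t assume x: "x \<in> Op" and t: "(t::real) > 0"
        have xK: "x \<in> Kc" using x Op_Kc by blast
        have "- 1 * a^2 * (exp (- \<mu> * t) * cos (a * (x$i1 - x0$i1))) \<le> lambda_j j (?H x t)"
        proof (rule lambda_Dg_lower[OF cardL j1 jN])
          fix i assume i: "i \<in> insert i1 L"
          show "- 1 * a^2 * (exp (- \<mu> * t) * cos (a * (x$i1 - x0$i1))) \<le> 2 * c1 i + (if i = i1 then - 1 * a^2 * (exp (- \<mu> * t) * cos (a * (x$i1 - x0$i1))) else 0)"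
          proof (cases "i = i1")
            case True then show ?thesis using c1_i1 by simp
          next
            case False then have "i \<in> L" using i by blast
            then show ?thesis using False c1_L ecos_nn[OF xK, of t] by simp
          qed
        qed
        then show "- \<mu> * 1 * (exp (- \<mu> * t) * cos (a * (x$i1 - x0$i1))) - lambda_j j (?H x t) \<le> 0"
          by (simp add: \<mu>_def)
      qed
      have bdry: "\<And>x t. x \<in> Kc - Op \<Longrightarrow> t > 0 \<Longrightarrow> quadf c1 x0 x + 1 * (exp (- \<mu> * t) * cos (a * (x$i1 - x0$i1))) \<le> u x t"
      proof -
        fix x t assume x: "x \<in> Kc - Op" and t: "(t::real) > 0"
        have "h x \<le> u x t" using uh[of x t] x Kc_Omega closure_subset t by auto
        moreover have "exp (- \<mu> * t) * cos (a * (x$i1 - x0$i1)) \<le> qd x / \<rho>^2" using ecos_edge[of t x] x t by simp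
        ultimately show "quadf c1 x0 x + 1 * (exp (- \<mu> * t) * cos (a * (x$i1 - x0$i1))) \<le> u x t"
          by (simp add: q1)
      qed
      have init: "\<And>x. x \<in> Kc \<Longrightarrow> quadf c1 x0 x + 1 * (exp (- \<mu> * 0) * cos (a * (x$i1 - x0$i1))) \<le> u x 0"
      proof -
        fix x assume x: "x \<in> Kc"
        then have "u x 0 = h x + 1" using u0 Kc_Omega bump_Kc by auto
        moreover have "cos (a * (x$i1 - x0$i1)) \<le> 1" by simp
        ultimately show "quadf c1 x0 x + 1 * (exp (- \<mu> * 0) * cos (a * (x$i1 - x0$i1))) \<le> u x 0"
          by (simp add: q1) (use cos_le_one[of "a * (x$i1 - x0$i1)"] qd_div0[of x] in linarith)
      qed
      have "quadf c1 x0 x0 + 1 * (exp (- \<mu> * t) * cos (a * (x0$i1 - x0$i1))) \<le> u x0 t"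
        by (rule parabolic_lower[where Kc=Kc and Op=Op, OF usup uc Kc_compact _ Op_open Op_Kc Op_Omega
              C21_cos[where ii=i1 and cc=c1 and cen=x0 and A=1 and \<mu>=\<mu> and a=a and c="x0$i1"] eq bdry init x0Kc])
           (use Kc_Omega closure_subset t in auto)
      then show ?thesis by (simp add: quadf_at)
    qed
    show ?thesis using z0 loc by simp
  qed

  have main2: "u x0 t \<le> z x0 - 1 * exp (- \<mu> * t)"
    if pu: "parabolic_solution j \<Omega> h (\<lambda>x. h x - bump x) u" and ez: "elliptic_solution j \<Omega> h z"
      and t: "t > 0" for u z t
  proof -
    have uc: "continuous_on (closure \<Omega> \<times> {0..}) (\<lambda>(x,t). u x t)"
      and ug: "\<forall>x\<in>frontier \<Omega>. \<forall>t>0. u x t = h x"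
      and u0: "\<forall>x\<in>\<Omega>. u x 0 = h x - bump x"
      and usub: "visc_sub_par j \<Omega> u"
      using pu unfolding parabolic_solution_def by auto
    have zc: "continuous_on (closure \<Omega>) z" and zg: "\<forall>x\<in>frontier \<Omega>. z x = h x"
      and zsup: "visc_super_ell j \<Omega> z"
      using ez unfolding elliptic_solution_def by auto
    have z0: "0 \<le> z x0"
    proof (rule field_le_epsilon)
      fix e :: real assume e: "e > 0"
      define \<epsilon> where "\<epsilon> = e / R^2"
      have \<epsilon>: "\<epsilon> > 0" using e R by (simp add: \<epsilon>_def)
      have pos: "\<forall>x\<in>\<Omega>. lambda_j j (Dg (\<lambda>i. 2 * (ch i + \<epsilon>))) > 0"
      proof
        fix x assume "x \<in> \<Omega>"
        have "2 * \<epsilon> \<le> lambda_j j (Dg (\<lambda>i. 2 * (ch i + \<epsilon>)))"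
          by (rule lambda_Dg_lower[OF cardL j1 jN]) (use chge in force)
        then show "lambda_j j (Dg (\<lambda>i. 2 * (ch i + \<epsilon>))) > 0" using \<epsilon> by linarith
      qed
      have gW: "\<forall>x\<in>frontier \<Omega>. quadf (\<lambda>i. ch i + \<epsilon>) x0 x + - (\<epsilon> * R^2) \<le> h x"
      proof
        fix x assume xf: "x \<in> frontier \<Omega>"
        have "quadf (\<lambda>i. ch i + \<epsilon>) x0 x = h x + \<epsilon> * (norm (x - x0))^2"
          by (subst quadf_add, subst quadf_const) (simp add: h_def)
        moreover have "\<epsilon> * (norm (x - x0))^2 \<le> \<epsilon> * R^2"
          using Rn2[OF front_cl[OF xf]] \<epsilon> by (intro mult_left_mono) auto
        ultimately show "quadf (\<lambda>i. ch i + \<epsilon>) x0 x + - (\<epsilon> * R^2) \<le> h x" by simp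
      qed
      have "quadf (\<lambda>i. ch i + \<epsilon>) x0 x0 + - (\<epsilon> * R^2) \<le> z x0"
        by (rule elliptic_lower[OF bdd zc zg zsup C2_const[of "\<lambda>i. ch i + \<epsilon>" x0 "- (\<epsilon> * R^2)"] pos gW x0cl])
      then show "0 \<le> z x0 + e" using R by (simp add: quadf_at \<epsilon>_def)
    qed
    have uh: "u x s \<le> h x" if xs: "x \<in> closure \<Omega>" "s \<ge> 0" for x s
    proof (rule field_le_epsilon)
      fix e :: real assume e: "e > 0"
      define \<epsilon> where "\<epsilon> = e / (1 + s)"
      have \<epsilon>: "\<epsilon> > 0" using e xs by (simp add: \<epsilon>_def)
      have eq: "\<And>x t. x \<in> \<Omega> \<Longrightarrow> t > 0 \<Longrightarrow> \<epsilon> - lambda_j j (Dg (\<lambda>i. 2 * ch i)) \<ge> 0"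
      proof -
        have "lambda_j j (Dg (\<lambda>i. 2 * ch i)) \<le> 0"
          by (rule lambda_Dg_upper[OF cardK j1]) (use chle in force)
        then show "\<And>x t. \<epsilon> - lambda_j j (Dg (\<lambda>i. 2 * ch i)) \<ge> 0" using \<epsilon> by linarith
      qed
      have bdry: "\<And>x t. x \<in> closure \<Omega> - \<Omega> \<Longrightarrow> t > 0 \<Longrightarrow> u x t \<le> quadf ch x0 x + (\<epsilon> + \<epsilon> * t)"
      proof -
        fix x t assume x: "x \<in> closure \<Omega> - \<Omega>" and t: "(t::real) > 0"
        then have "x \<in> frontier \<Omega>" using cl_split by blast
        then have "u x t = h x" using ug t by blast
        then show "u x t \<le> quadf ch x0 x + (\<epsilon> + \<epsilon> * t)" using \<epsilon> t
          by (simp add: h_def)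
      qed
      have init: "\<And>x. x \<in> closure \<Omega> \<Longrightarrow> u x 0 \<le> quadf ch x0 x + (\<epsilon> + \<epsilon> * 0)"
      proof -
        fix x assume x: "x \<in> closure \<Omega>"
        have "u x 0 \<le> h x"
        proof (cases "x \<in> \<Omega>")
          case True then show ?thesis using u0 bump_nn[of x] by simp
        next
          case False then have "x \<in> frontier \<Omega>" using cl_split x by blast
          then show ?thesis using u_frontier0[OF uc ug] by simp
        qed
        then show "u x 0 \<le> quadf ch x0 x + (\<epsilon> + \<epsilon> * 0)" using \<epsilon> by (simp add: h_def)
      qed
      have "u x s \<le> quadf ch x0 x + (\<epsilon> + \<epsilon> * s)"
        by (rule parabolic_upper[where Kc="closure \<Omega>" and Op=\<Omega>, OF usub uc cK subset_refl opn closure_subset subset_refl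
              C21_lin[of ch x0 "\<epsilon>" "\<epsilon>"] eq bdry init xs])
      moreover have "\<epsilon> + \<epsilon> * s = e"
      proof -
        have "\<epsilon> + \<epsilon> * s = \<epsilon> * (1 + s)" by (simp add: algebra_simps)
        also have "\<dots> = e" using xs by (simp add: \<epsilon>_def)
        finally show ?thesis .
      qed
      ultimately show "u x s \<le> h x + e" by (simp add: h_def)
    qed
    have loc: "u x0 t \<le> - exp (- \<mu> * t)"
    proof -
      let ?H = "\<lambda>x t. Dg (\<lambda>i. 2 * c2 i + (if i = i1 then - (- 1) * a^2 * (exp (- \<mu> * t) * cos (a * (x$i1 - x0$i1))) else 0))"
      have eq: "\<And>x t. x \<in> Op \<Longrightarrow> t > 0 \<Longrightarrow> - \<mu> * (- 1) * (exp (- \<mu> * t) * cos (a * (x$i1 - x0$i1))) - lambda_j j (?H x t) \<ge> 0"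
      proof -
        fix x t assume x: "x \<in> Op" and t: "(t::real) > 0"
        have xK: "x \<in> Kc" using x Op_Kc by blast
        have "lambda_j j (?H x t) \<le> - (- 1) * a^2 * (exp (- \<mu> * t) * cos (a * (x$i1 - x0$i1)))"
        proof (rule lambda_Dg_upper[OF cardK j1])
          fix i assume i: "i \<in> insert i1 K"
          show "2 * c2 i + (if i = i1 then - (- 1) * a^2 * (exp (- \<mu> * t) * cos (a * (x$i1 - x0$i1))) else 0) \<le> - (- 1) * a^2 * (exp (- \<mu> * t) * cos (a * (x$i1 - x0$i1)))"
          proof (cases "i = i1")
            case True then show ?thesis using c2_i1 by simp
          next
            case False then have "i \<in> K" using i by blast
            then show ?thesis using False c2_K ecos_nn[OF xK, of t] by simp
          qed
        qed
        then show "- \<mu> * (- 1) * (exp (- \<mu> * t) * cos (a * (x$i1 - x0$i1))) - lambda_j j (?H x t) \<ge> 0"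
          by (simp add: \<mu>_def)
      qed
      have bdry: "\<And>x t. x \<in> Kc - Op \<Longrightarrow> t > 0 \<Longrightarrow> u x t \<le> quadf c2 x0 x + (- 1) * (exp (- \<mu> * t) * cos (a * (x$i1 - x0$i1)))"
      proof -
        fix x t assume x: "x \<in> Kc - Op" and t: "(t::real) > 0"
        have "u x t \<le> h x" using uh[of x t] x Kc_Omega closure_subset t by auto
        moreover have "exp (- \<mu> * t) * cos (a * (x$i1 - x0$i1)) \<le> qd x / \<rho>^2" using ecos_edge[of t x] x t by simp
        ultimately show "u x t \<le> quadf c2 x0 x + (- 1) * (exp (- \<mu> * t) * cos (a * (x$i1 - x0$i1)))"
          by (simp add: q2)
      qed
      have init: "\<And>x. x \<in> Kc \<Longrightarrow> u x 0 \<le> quadf c2 x0 x + (- 1) * (exp (- \<mu> * 0) * cos (a * (x$i1 - x0$i1)))"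
      proof -
        fix x assume x: "x \<in> Kc"
        then have "u x 0 = h x - 1" using u0 Kc_Omega bump_Kc by auto
        then show "u x 0 \<le> quadf c2 x0 x + (- 1) * (exp (- \<mu> * 0) * cos (a * (x$i1 - x0$i1)))"
          by (simp add: q2) (use cos_le_one[of "a * (x$i1 - x0$i1)"] qd_div0[of x] in linarith)
      qed
      have "u x0 t \<le> quadf c2 x0 x0 + (- 1) * (exp (- \<mu> * t) * cos (a * (x0$i1 - x0$i1)))"
        by (rule parabolic_upper[where Kc=Kc and Op=Op, OF usub uc Kc_compact _ Op_open Op_Kc Op_Omega
              C21_cos[where ii=i1 and cc=c2 and cen=x0 and A="- 1" and \<mu>=\<mu> and a=a and c="x0$i1"] eq bdry init x0Kc])
           (use Kc_Omega closure_subset t in auto)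
      then show ?thesis by (simp add: quadf_at)
    qed
    show ?thesis using z0 loc by simp
  qed
  show ?thesis
  proof (rule conjI)
    show "\<exists>g u0 \<mu>1 k.
            continuous_on (frontier \<Omega>) g \<and> continuous_on (closure \<Omega>) u0 \<and>
            (\<forall>x\<in>frontier \<Omega>. u0 x = g x) \<and> \<mu>1 > 0 \<and> k > 0 \<and>
            (\<forall>u z. parabolic_solution j \<Omega> g u0 u \<longrightarrow> elliptic_solution j \<Omega> g z \<longrightarrow>
               (\<forall>t>0. u x0 t \<ge> z x0 + k * exp (- \<mu>1 * t)))"
    proof (rule exI[of _ h], rule exI[of _ "\<lambda>x. h x + bump x"], rule exI[of _ \<mu>], rule exI[of _ "1::real"], intro conjI)
      show "continuous_on (frontier \<Omega>) h" by (rule h_cont)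
      show "continuous_on (closure \<Omega>) (\<lambda>x. h x + bump x)" by (intro continuous_on_add h_cont bump_cont)
      show "\<forall>x\<in>frontier \<Omega>. h x + bump x = h x" using bump_front by simp
      show "\<mu> > 0" by (rule \<mu>)
      show "(1::real) > 0" by simp
      show "\<forall>u z. parabolic_solution j \<Omega> h (\<lambda>x. h x + bump x) u \<longrightarrow> elliptic_solution j \<Omega> h z \<longrightarrow>
               (\<forall>t>0. u x0 t \<ge> z x0 + 1 * exp (- \<mu> * t))"
        using main1 by blast
    qed
    show "\<exists>g u0 \<mu>1 k.
            continuous_on (frontier \<Omega>) g \<and> continuous_on (closure \<Omega>) u0 \<and>
            (\<forall>x\<in>frontier \<Omega>. u0 x = g x) \<and> \<mu>1 > 0 \<and> k > 0 \<and>
            (\<forall>u z. parabolic_solution j \<Omega> g u0 u \<longrightarrow> elliptic_solution j \<Omega> g z \<longrightarrow>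
               (\<forall>t>0. u x0 t \<le> z x0 - k * exp (- \<mu>1 * t)))"
    proof (rule exI[of _ h], rule exI[of _ "\<lambda>x. h x - bump x"], rule exI[of _ \<mu>], rule exI[of _ "1::real"], intro conjI)
      show "continuous_on (frontier \<Omega>) h" by (rule h_cont)
      show "continuous_on (closure \<Omega>) (\<lambda>x. h x - bump x)" by (intro continuous_on_diff h_cont bump_cont)
      show "\<forall>x\<in>frontier \<Omega>. h x - bump x = h x" using bump_front by simp
      show "\<mu> > 0" by (rule \<mu>)
      show "(1::real) > 0" by simp
      show "\<forall>u z. parabolic_solution j \<Omega> h (\<lambda>x. h x - bump x) u \<longrightarrow> elliptic_solution j \<Omega> h z \<longrightarrow>
               (\<forall>t>0. u x0 t \<le> z x0 - 1 * exp (- \<mu> * t))"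
        using main2 by blast
    qed
  qed
qed


end
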